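(* The family of logics $\mathrm{FO}$ is $\mathbb{T}^\times$-compositional and also $\mathbb{T}$-compositional.
   Context: Sorts are $\Xi=\omega$ (arities). For an $\omega$-sorted family of partial orders $A$ and $n<\omega$, $\mathbb{T}^\times_nA$ is the set of finite or infinite trees with ordered successors labelled by elements of $A$ or variables $x_0,\dots,x_{n-1}$ (arity $0$), where a vertex with label in $A_k$ has exactly $k$ successors, variables label leaves only, and the root is labelled by an element of $A$; ordered by same shape and vertexwise comparison of labels. $\mathbb{T}A\subseteq\mathbb{T}^\times A$ consists of the trees using each variable at most once. $\mathbb{T}^\times$ is a monad with $\mathrm{sing}(a)=a(x_0,\dots,x_{n-1})$ and $\mathrm{flat}$ given by substituting, for each vertex $v$ of a tree of trees, the tree $T(v)$ with its $x_i$-leaves linked to the root of the tree at the $(i+1)$-st successor of $v$ and unravelling; $\mathbb{T}$ is a submonad. For an alphabet (finite unordered set) $\Sigma$, a tree $t$ of sort $n$ is identified with the structure $\langle\mathrm{dom}(t),\preceq,(S_i)_{i<\omega},(P_c)_{c\in\Sigma},(Q_i)_{i<n},R\rangle$ (tree order, successor relations, label predicates, variable predicates, root). FO is the family of logics assigning to $\Sigma$ the first-order sentences over this signature, a sentence of sort $n$ being evaluated on trees of sort $n$. For a monad $\mathbb{M}\in\{\mathbb{T},\mathbb{T}^\times\}$ and a set $\Delta$ of formulae, $s\sqsubseteq_\Delta t$ iff every formula in $\Delta$ satisfied by $s$ is satisfied by $t$. A preorder $\sqsubseteq$ on $\mathbb{M}\Sigma$ is a congruence ordering if $\mathbb{M}q(S)\leq\mathbb{M}q(T)$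 implies $\mathrm{flat}(S)\sqsubseteq\mathrm{flat}(T)$ for $S,T\in\mathbb{M}\mathbb{M}\Sigma$, $q$ the quotient map onto the ordered set of classes. A family of logics $L$ is $\mathbb{M}$-compositional if for every finite subfamily $\Phi$ (finitely many formulae per alphabet) there is $\Delta$ with $\Phi\subseteq\Delta\subseteq L$, finite in each sort for each alphabet up to equivalence, such that $\sqsubseteq_{\Delta[\Sigma]}$ is a congruence ordering on $\mathbb{M}\Sigma$ for every alphabet $\Sigma$. *)

theory Defs
  imports Main "HOL-Library.Sublist"
begin

text \<open>Elements of an omega-sorted family are represented as pairs
(a, k) where k is the sort (= arity).  A tree is a partial function from positions
(lists of successor indices, root = []) to labels; None means "not a vertex".\<close>

datatype 'a lab = Sym 'a | Var nat

type_synonym 'a tree = "nat list \<Rightarrow> 'a lab option"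

text \<open>Well-formed trees of sort n with labels from the sorted family A.
 If lin is True, each variable is used at most once (monad T), otherwise
 arbitrary (monad T^x).\<close>
definition wf_tree :: "bool \<Rightarrow> ('b \<times> nat) set \<Rightarrow> nat \<Rightarrow> ('b \<times> nat) tree \<Rightarrow> bool" where
  "wf_tree lin A n t \<longleftrightarrow>
     (\<exists>a\<in>A. t [] = Some (Sym a)) \<and>
     (\<forall>w a. t w = Some (Sym a) \<longrightarrow> a \<in> A \<and> (\<forall>i. t (w @ [i]) \<noteq> None \<longleftrightarrow> i < snd a)) \<and>
     (\<forall>w j. t w = Some (Var j) \<longrightarrow> j < n \<and> (\<forall>i. t (w @ [i]) = None)) \<and>
     (\<forall>w i. t (w @ [i]) \<noteq> None \<longrightarrow> t w \<noteq> None) \<and>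
     (lin \<longrightarrow> (\<forall>w w' j. t w = Some (Var j) \<and> t w' = Some (Var j) \<longrightarrow> w = w'))"

definition trees_sorted :: "bool \<Rightarrow> ('c \<times> nat) set \<Rightarrow> (('c \<times> nat) tree \<times> nat) set" where
  "trees_sorted lin \<Sigma> = {(s, k). wf_tree lin \<Sigma> k s}"

definition tree_le :: "('a \<Rightarrow> 'a \<Rightarrow> bool) \<Rightarrow> 'a tree \<Rightarrow> 'a tree \<Rightarrow> bool" where
  "tree_le le s t \<longleftrightarrow> (\<forall>w. rel_option (rel_lab le) (s w) (t w))"

definition map_tree :: "('a \<Rightarrow> 'b) \<Rightarrow> 'a tree \<Rightarrow> 'b tree" where
  "map_tree f t = (\<lambda>w. map_option (map_lab f) (t w))"

definition is_var :: "'a lab option \<Rightarrow> bool" where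
  "is_var x \<longleftrightarrow> (\<exists>i. x = Some (Var i))"

text \<open>go f S u w: label at position w of the unravelled tree obtained by substitution,
 starting at vertex u of the tree of trees S (f is fuel, decreasing).  When the walk
 through the tree T = S(u) reaches an x_i-leaf, it continues at the root of the tree
 at the (i+1)-st (0-indexed: i-th) successor u@[i] of u.\<close>
fun go :: "nat \<Rightarrow> (('c \<times> nat) tree \<times> nat) tree \<Rightarrow> nat list \<Rightarrow> nat list \<Rightarrow> ('c \<times> nat) lab option" where
  "go 0 S u w = None"
| "go (Suc f) S u w =
     (case S u of
        None \<Rightarrow> None
      | Some (Var j) \<Rightarrow> (if w = [] then Some (Var j) else None)
      | Some (Sym (T, k)) \<Rightarrow>
          (case T w of
             Some (Sym a) \<Rightarrow> Some (Sym a)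
           | _ \<Rightarrow>
             (case find (\<lambda>l. is_var (T (take l w))) [1..<Suc (length w)] of
                None \<Rightarrow> None
              | Some l \<Rightarrow> (case T (take l w) of
                            Some (Var i) \<Rightarrow> go f S (u @ [i]) (drop l w)
                          | _ \<Rightarrow> None))))"

definition flat :: "(('c \<times> nat) tree \<times> nat) tree \<Rightarrow> ('c \<times> nat) tree" where
  "flat S = (\<lambda>w. go (Suc (length w)) S [] w)"

datatype 'a fo =
    Eqf nat nat
  | Lef nat nat
  | Succf nat nat nat
  | Labf 'a nat
  | VarPf nat nat
  | Rootf nat
  | Negf "'a fo"
  | Conjf "'a fo" "'a fo"
  | Exf nat "'a fo"

fun holds :: "'a tree \<Rightarrow> (nat \<Rightarrow> nat list) \<Rightarrow> 'a fo \<Rightarrow> bool" where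
  "holds t e (Eqf x y) \<longleftrightarrow> e x = e y"
| "holds t e (Lef x y) \<longleftrightarrow> prefix (e x) (e y)"
| "holds t e (Succf i x y) \<longleftrightarrow> e y = e x @ [i]"
| "holds t e (Labf c x) \<longleftrightarrow> t (e x) = Some (Sym c)"
| "holds t e (VarPf i x) \<longleftrightarrow> t (e x) = Some (Var i)"
| "holds t e (Rootf x) \<longleftrightarrow> e x = []"
| "holds t e (Negf \<phi>) \<longleftrightarrow> \<not> holds t e \<phi>"
| "holds t e (Conjf \<phi> \<psi>) \<longleftrightarrow> holds t e \<phi> \<and> holds t e \<psi>"
| "holds t e (Exf x \<phi>) \<longleftrightarrow> (\<exists>w. t w \<noteq> None \<and> holds t (e(x := w)) \<phi>)"

fun fv :: "'a fo \<Rightarrow> nat set" where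
  "fv (Eqf x y) = {x, y}"
| "fv (Lef x y) = {x, y}"
| "fv (Succf i x y) = {x, y}"
| "fv (Labf c x) = {x}"
| "fv (VarPf i x) = {x}"
| "fv (Rootf x) = {x}"
| "fv (Negf \<phi>) = fv \<phi>"
| "fv (Conjf \<phi> \<psi>) = fv \<phi> \<union> fv \<psi>"
| "fv (Exf x \<phi>) = fv \<phi> - {x}"

fun syms :: "'a fo \<Rightarrow> 'a set" where
  "syms (Labf c x) = {c}"
| "syms (Negf \<phi>) = syms \<phi>"
| "syms (Conjf \<phi> \<psi>) = syms \<phi> \<union> syms \<psi>"
| "syms (Exf x \<phi>) = syms \<phi>"
| "syms _ = {}"

fun qvars :: "'a fo \<Rightarrow> nat set" where
  "qvars (VarPf i x) = {i}"
| "qvars (Negf \<phi>) = qvars \<phi>"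
| "qvars (Conjf \<phi> \<psi>) = qvars \<phi> \<union> qvars \<psi>"
| "qvars (Exf x \<phi>) = qvars \<phi>"
| "qvars _ = {}"

text \<open>A sentence is evaluated with an arbitrary (irrelevant) environment.\<close>
definition models :: "'a tree \<Rightarrow> 'a fo \<Rightarrow> bool" where
  "models t \<phi> \<longleftrightarrow> holds t (\<lambda>_. []) \<phi>"

definition FO :: "('c \<times> nat) set \<Rightarrow> (nat \<times> ('c \<times> nat) fo) set" where
  "FO \<Sigma> = {(n, \<phi>). fv \<phi> = {} \<and> syms \<phi> \<subseteq> \<Sigma> \<and> (\<forall>i\<in>qvars \<phi>. i < n)}"

definition sq :: "(nat \<times> 'a fo) set \<Rightarrow> nat \<Rightarrow> 'a tree \<Rightarrow> 'a tree \<Rightarrow> bool" where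
  "sq \<Delta> n s t \<longleftrightarrow> (\<forall>\<phi>. (n, \<phi>) \<in> \<Delta> \<longrightarrow> models s \<phi> \<longrightarrow> models t \<phi>)"

definition qcls :: "bool \<Rightarrow> ('c \<times> nat) set \<Rightarrow> (nat \<times> ('c \<times> nat) fo) set \<Rightarrow> nat
                    \<Rightarrow> ('c \<times> nat) tree \<Rightarrow> ('c \<times> nat) tree set" where
  "qcls lin \<Sigma> \<Delta> k s = {t. wf_tree lin \<Sigma> k t \<and> sq \<Delta> k s t \<and> sq \<Delta> k t s}"

definition cls_le :: "(nat \<times> 'a fo) set \<Rightarrow> ('a tree set \<times> nat) \<Rightarrow> ('a tree set \<times> nat) \<Rightarrow> bool" where
  "cls_le \<Delta> X Y \<longleftrightarrow> snd X = snd Y \<and> (\<exists>s\<in>fst X. \<exists>t\<in>fst Y. sq \<Delta> (snd X) s t)"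

definition congruence_ordering :: "bool \<Rightarrow> ('c \<times> nat) set \<Rightarrow> (nat \<times> ('c \<times> nat) fo) set \<Rightarrow> bool" where
  "congruence_ordering lin \<Sigma> \<Delta> \<longleftrightarrow>
     (\<forall>n S T. wf_tree lin (trees_sorted lin \<Sigma>) n S \<longrightarrow> wf_tree lin (trees_sorted lin \<Sigma>) n T \<longrightarrow>
        tree_le (cls_le \<Delta>) (map_tree (\<lambda>(s, k). (qcls lin \<Sigma> \<Delta> k s, k)) S)
                           (map_tree (\<lambda>(s, k). (qcls lin \<Sigma> \<Delta> k s, k)) T) \<longrightarrow>
        sq \<Delta> n (flat S) (flat T))"

text \<open>Models of a sentence among trees of sort n (in the monad); used for "up to equivalence".\<close>
definition mods :: "bool \<Rightarrow> ('c \<times> nat) set \<Rightarrow> nat \<Rightarrow> ('c \<times> nat) fo \<Rightarrow> ('c \<times> nat) tree set" where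
  "mods lin \<Sigma> n \<phi> = {t. wf_tree lin \<Sigma> n t \<and> models t \<phi>}"

definition compositional :: "bool \<Rightarrow> (('c \<times> nat) set \<Rightarrow> (nat \<times> ('c \<times> nat) fo) set) \<Rightarrow> bool" where
  "compositional lin L \<longleftrightarrow>
     (\<forall>\<Phi>. (\<forall>\<Sigma>. finite \<Sigma> \<longrightarrow> finite (\<Phi> \<Sigma>) \<and> \<Phi> \<Sigma> \<subseteq> L \<Sigma>) \<longrightarrow>
       (\<exists>\<Delta>. \<forall>\<Sigma>. finite \<Sigma> \<longrightarrow>
           \<Phi> \<Sigma> \<subseteq> \<Delta> \<Sigma> \<and> \<Delta> \<Sigma> \<subseteq> L \<Sigma> \<and>
           (\<forall>n. finite ((\<lambda>(m, \<phi>). mods lin \<Sigma> n \<phi>) ` {p \<in> \<Delta> \<Sigma>. fst p = n})) \<and>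
           congruence_ordering lin \<Sigma> (\<Delta> \<Sigma>)))"

end

theory Submission
  imports Defs "HOL-Library.FuncSet"
begin


type_synonym penv = "nat \<Rightarrow> nat list option"

definition atomeq :: "nat set \<Rightarrow> 'a tree \<Rightarrow> penv \<Rightarrow> 'a tree \<Rightarrow> penv \<Rightarrow> bool" where
  "atomeq V t pe t' pe' \<longleftrightarrow> (\<forall>x\<in>V. (pe x = None \<longleftrightarrow> pe' x = None) \<and>
     (\<forall>y\<in>V. \<forall>a a' b b'. pe x = Some a \<longrightarrow> pe' x = Some a' \<longrightarrow> pe y = Some b \<longrightarrow> pe' y = Some b' \<longrightarrow>
        t a = t' a' \<and> (a = [] \<longleftrightarrow> a' = []) \<and> (a = b \<longleftrightarrow> a' = b') \<and>
        (prefix a b \<longleftrightarrow> prefix a' b') \<and> (\<forall>i. b = a @ [i] \<longleftrightarrow> b' = a' @ [i])))"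

fun ef :: "nat set \<Rightarrow> nat \<Rightarrow> 'a tree \<Rightarrow> penv \<Rightarrow> 'a tree \<Rightarrow> penv \<Rightarrow> bool" where
  "ef V 0 t pe t' pe' = atomeq V t pe t' pe'"
| "ef V (Suc m) t pe t' pe' = (atomeq V t pe t' pe' \<and> (\<forall>x\<in>V.
     (\<forall>w. t w \<noteq> None \<longrightarrow> (\<exists>w'. t' w' \<noteq> None \<and> ef V m t (pe(x:=Some w)) t' (pe'(x:=Some w')))) \<and>
     (\<forall>w'. t' w' \<noteq> None \<longrightarrow> (\<exists>w. t w \<noteq> None \<and> ef V m t (pe(x:=Some w)) t' (pe'(x:=Some w'))))))"

declare ef.simps(2)[simp del]

lemma efD1:
  assumes "ef V (Suc m) t pe t' pe'" "x \<in> V" "t w \<noteq> None"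
  shows "\<exists>w'. t' w' \<noteq> None \<and> ef V m t (pe(x:=Some w)) t' (pe'(x:=Some w'))"
proof -
  have "\<forall>x\<in>V. (\<forall>w. t w \<noteq> None \<longrightarrow> (\<exists>w'. t' w' \<noteq> None \<and> ef V m t (pe(x:=Some w)) t' (pe'(x:=Some w'))))"
    using assms(1) unfolding ef.simps(2) by blast
  then show ?thesis using assms(2,3) by blast
qed

lemma efD2:
  assumes "ef V (Suc m) t pe t' pe'" "x \<in> V" "t' w' \<noteq> None"
  shows "\<exists>w. t w \<noteq> None \<and> ef V m t (pe(x:=Some w)) t' (pe'(x:=Some w'))"
proof -
  have "\<forall>x\<in>V. (\<forall>w'. t' w' \<noteq> None \<longrightarrow> (\<exists>w. t w \<noteq> None \<and> ef V m t (pe(x:=Some w)) t' (pe'(x:=Some w'))))"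
    using assms(1) unfolding ef.simps(2) by blast
  then show ?thesis using assms(2,3) by blast
qed

lemma ef_atomeq: "ef V m t pe t' pe' \<Longrightarrow> atomeq V t pe t' pe'"
  by (cases m) (simp_all add: ef.simps(2))

lemma efI:
  assumes "atomeq V t pe t' pe'"
    "\<And>x w. x \<in> V \<Longrightarrow> t w \<noteq> None \<Longrightarrow> \<exists>w'. t' w' \<noteq> None \<and> ef V m t (pe(x:=Some w)) t' (pe'(x:=Some w'))"
    "\<And>x w'. x \<in> V \<Longrightarrow> t' w' \<noteq> None \<Longrightarrow> \<exists>w. t w \<noteq> None \<and> ef V m t (pe(x:=Some w)) t' (pe'(x:=Some w'))"
  shows "ef V (Suc m) t pe t' pe'"
  unfolding ef.simps(2) using assms by blast

lemma ef_mono: "ef V (Suc m) t pe t' pe' \<Longrightarrow> ef V m t pe t' pe'"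
proof (induction m arbitrary: pe pe')
  case 0 then show ?case using ef_atomeq by simp
next
  case (Suc m)
  show ?case
  proof (rule efI)
    show "atomeq V t pe t' pe'" using Suc.prems ef_atomeq by blast
  next
    fix x w assume "x \<in> V" "t w \<noteq> None"
    then obtain w' where "t' w' \<noteq> None" "ef V (Suc m) t (pe(x:=Some w)) t' (pe'(x:=Some w'))"
      using efD1[OF Suc.prems] by blast
    then show "\<exists>w'. t' w' \<noteq> None \<and> ef V m t (pe(x:=Some w)) t' (pe'(x:=Some w'))" using Suc.IH by blast
  next
    fix x w' assume "x \<in> V" "t' w' \<noteq> None"
    then obtain w where "t w \<noteq> None" "ef V (Suc m) t (pe(x:=Some w)) t' (pe'(x:=Some w'))"
      using efD2[OF Suc.prems] by blast
    then show "\<exists>w. t w \<noteq> None \<and> ef V m t (pe(x:=Some w)) t' (pe'(x:=Some w'))" using Suc.IH by blast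
  qed
qed

lemma ef_mono_le: "ef V m t pe t' pe' \<Longrightarrow> k \<le> m \<Longrightarrow> ef V k t pe t' pe'"
proof (induction m)
  case 0 then show ?case by simp
next
  case (Suc m)
  show ?case
  proof (cases "k = Suc m")
    case True then show ?thesis using Suc.prems by simp
  next
    case False
    then have "k \<le> m" using Suc.prems by simp
    then show ?thesis using Suc.IH ef_mono Suc.prems by blast
  qed
qed

lemma atomeq_refl: "atomeq V t pe t pe"
  unfolding atomeq_def by auto

lemma ef_refl: "ef V m t pe t pe"
proof (induction m arbitrary: pe)
  case 0 then show ?case by (simp add: atomeq_refl)
next
  case (Suc m) then show ?case by (intro efI atomeq_refl) blast+
qed

lemma atomeq_sym:
  assumes "atomeq V t pe t' pe'" shows "atomeq V t' pe' t pe"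
  unfolding atomeq_def
proof (intro ballI conjI allI impI)
  fix x assume "x \<in> V"
  then show "(pe' x = None) = (pe x = None)" using assms unfolding atomeq_def by simp
next
  fix x y a a' b b' assume xy: "x \<in> V" "y \<in> V" and
    h2: "pe' x = Some a" "pe x = Some a'" "pe' y = Some b" "pe y = Some b'"
  have "t a' = t' a \<and> (a' = [] \<longleftrightarrow> a = []) \<and> (a' = b' \<longleftrightarrow> a = b) \<and>
        (prefix a' b' \<longleftrightarrow> prefix a b) \<and> (\<forall>i. b' = a' @ [i] \<longleftrightarrow> b = a @ [i])"
    using assms xy h2 unfolding atomeq_def by blast
  then show "t' a = t a'" "(a = []) = (a' = [])" "(a = b) = (a' = b')" "prefix a b = prefix a' b'"
    "\<And>i. (b = a @ [i]) = (b' = a' @ [i])" by auto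
qed

lemma ef_sym: "ef V m t pe t' pe' \<Longrightarrow> ef V m t' pe' t pe"
proof (induction m arbitrary: pe pe')
  case 0 then show ?case by (simp add: atomeq_sym)
next
  case (Suc m)
  show ?case
  proof (rule efI)
    show "atomeq V t' pe' t pe" using Suc.prems ef_atomeq atomeq_sym by blast
  next
    fix x w assume "x \<in> V" "t' w \<noteq> None"
    then obtain w' where "t w' \<noteq> None" "ef V m t (pe(x:=Some w')) t' (pe'(x:=Some w))"
      using efD2[OF Suc.prems] by blast
    then show "\<exists>w'. t w' \<noteq> None \<and> ef V m t' (pe'(x:=Some w)) t (pe(x:=Some w'))" using Suc.IH by blast
  next
    fix x w' assume "x \<in> V" "t w' \<noteq> None"
    then obtain w where "t' w \<noteq> None" "ef V m t (pe(x:=Some w')) t' (pe'(x:=Some w))"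
      using efD1[OF Suc.prems] by blast
    then show "\<exists>w. t' w \<noteq> None \<and> ef V m t' (pe'(x:=Some w)) t (pe(x:=Some w'))" using Suc.IH by blast
  qed
qed

lemma atomeq_restrict:
  assumes "atomeq V t pe t' pe'" shows "atomeq V t (pe(z:=None)) t' (pe'(z:=None))"
  unfolding atomeq_def
proof (intro ballI conjI allI impI)
  fix x assume "x \<in> V"
  then show "((pe(z:=None)) x = None) = ((pe'(z:=None)) x = None)" using assms unfolding atomeq_def by simp
next
  fix x y a a' b b' assume xy: "x \<in> V" "y \<in> V" and
    h: "(pe(z:=None)) x = Some a" "(pe'(z:=None)) x = Some a'" "(pe(z:=None)) y = Some b" "(pe'(z:=None)) y = Some b'"
  then have h2: "pe x = Some a" "pe' x = Some a'" "pe y = Some b" "pe' y = Some b'"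
    by (auto split: if_splits)
  have "t a = t' a' \<and> (a = [] \<longleftrightarrow> a' = []) \<and> (a = b \<longleftrightarrow> a' = b') \<and>
        (prefix a b \<longleftrightarrow> prefix a' b') \<and> (\<forall>i. b = a @ [i] \<longleftrightarrow> b' = a' @ [i])"
    using assms xy h2 unfolding atomeq_def by blast
  then show "t a = t' a'" "(a = []) = (a' = [])" "(a = b) = (a' = b')" "prefix a b = prefix a' b'"
    "\<And>i. (b = a @ [i]) = (b' = a' @ [i])" by auto
qed

lemma ef_restrict: "ef V m t pe t' pe' \<Longrightarrow> ef V m t (pe(z:=None)) t' (pe'(z:=None))"
proof (induction m arbitrary: pe pe')
  case 0 then have "atomeq V t pe t' pe'" by simp
  then show ?case unfolding ef.simps(1) by (rule atomeq_restrict)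
next
  case (Suc m)
  show ?case
  proof (rule efI)
    show "atomeq V t (pe(z:=None)) t' (pe'(z:=None))" using Suc.prems atomeq_restrict ef_atomeq by blast
  next
    fix x w assume "x \<in> V" "t w \<noteq> None"
    then obtain w' where w': "t' w' \<noteq> None" "ef V m t (pe(x:=Some w)) t' (pe'(x:=Some w'))"
      using efD1[OF Suc.prems] by blast
    show "\<exists>w'. t' w' \<noteq> None \<and> ef V m t (pe(z:=None, x:=Some w)) t' (pe'(z:=None, x:=Some w'))"
    proof (cases "x = z")
      case True then show ?thesis using w' by auto
    next
      case False
      have "ef V m t (pe(x:=Some w, z:=None)) t' (pe'(x:=Some w', z:=None))"
        using Suc.IH[OF w'(2)] .
      then have "ef V m t (pe(z:=None, x:=Some w)) t' (pe'(z:=None, x:=Some w'))"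
        using False by (simp add: fun_upd_twist)
      then show ?thesis using w' by blast
    qed
  next
    fix x w' assume "x \<in> V" "t' w' \<noteq> None"
    then obtain w where w: "t w \<noteq> None" "ef V m t (pe(x:=Some w)) t' (pe'(x:=Some w'))"
      using efD2[OF Suc.prems] by blast
    show "\<exists>w. t w \<noteq> None \<and> ef V m t (pe(z:=None, x:=Some w)) t' (pe'(z:=None, x:=Some w'))"
    proof (cases "x = z")
      case True then show ?thesis using w by auto
    next
      case False
      have "ef V m t (pe(x:=Some w, z:=None)) t' (pe'(x:=Some w', z:=None))"
        using Suc.IH[OF w(2)] .
      then have "ef V m t (pe(z:=None, x:=Some w)) t' (pe'(z:=None, x:=Some w'))"
        using False by (simp add: fun_upd_twist)
      then show ?thesis using w by blast
    qed
  qed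
qed

fun rank :: "'a fo \<Rightarrow> nat" where
  "rank (Negf \<phi>) = rank \<phi>"
| "rank (Conjf \<phi> \<psi>) = max (rank \<phi>) (rank \<psi>)"
| "rank (Exf x \<phi>) = Suc (rank \<phi>)"
| "rank _ = 0"

fun bv :: "'a fo \<Rightarrow> nat set" where
  "bv (Negf \<phi>) = bv \<phi>"
| "bv (Conjf \<phi> \<psi>) = bv \<phi> \<union> bv \<psi>"
| "bv (Exf x \<phi>) = insert x (bv \<phi>)"
| "bv _ = {}"

definition agree :: "(nat \<Rightarrow> nat list) \<Rightarrow> penv \<Rightarrow> bool" where
  "agree e pe \<longleftrightarrow> (\<forall>x a. pe x = Some a \<longrightarrow> e x = a)"

lemma agree_upd: "agree e pe \<Longrightarrow> agree (e(x:=w)) (pe(x:=Some w))"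
  unfolding agree_def by auto


lemma atomeq_at:
  assumes "atomeq V t pe t' pe'" "x \<in> V" "y \<in> V" "pe x = Some a" "pe y = Some b"
  shows "\<exists>a' b'. pe' x = Some a' \<and> pe' y = Some b' \<and> t a = t' a' \<and> (a = [] \<longleftrightarrow> a' = []) \<and> (a = b \<longleftrightarrow> a' = b') \<and>
        (prefix a b \<longleftrightarrow> prefix a' b') \<and> (\<forall>i. b = a @ [i] \<longleftrightarrow> b' = a' @ [i])"
proof -
  note h = bspec[OF assms(1)[unfolded atomeq_def] assms(2)]
  note hy = bspec[OF assms(1)[unfolded atomeq_def] assms(3)]
  have "pe' x \<noteq> None" using h assms(4) by simp
  moreover have "pe' y \<noteq> None" using hy assms(5) by simp
  ultimately obtain a' b' where ab: "pe' x = Some a'" "pe' y = Some b'" by auto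
  have "t a = t' a' \<and> (a = [] \<longleftrightarrow> a' = []) \<and> (a = b \<longleftrightarrow> a' = b') \<and>
        (prefix a b \<longleftrightarrow> prefix a' b') \<and> (\<forall>i. b = a @ [i] \<longleftrightarrow> b' = a' @ [i])"
    using bspec[OF conjunct2[OF h] assms(3)] assms(4,5) ab by simp
  then show ?thesis using ab by blast
qed

lemma placed_val:
  assumes "x \<in> fv \<phi>" "fv \<phi> \<subseteq> {x\<in>V. pe x \<noteq> None}"
  obtains a where "x \<in> V" "pe x = Some a"
  using assms by auto

lemma ef_holds:
  assumes "ef V m t pe t' pe'" "rank \<phi> \<le> m" "bv \<phi> \<subseteq> V" "fv \<phi> \<subseteq> {x\<in>V. pe x \<noteq> None}"
    "agree e pe" "agree e' pe'"
  shows "holds t e \<phi> \<longleftrightarrow> holds t' e' \<phi>"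
  using assms
proof (induction \<phi> arbitrary: m pe pe' e e')
  case (Exf x \<phi>)
  then obtain m' where m: "m = Suc m'" by (cases m) auto
  have xV: "x \<in> V" using Exf.prems by auto
  have fvs: "\<And>w. fv \<phi> \<subseteq> {y\<in>V. (pe(x:=Some w)) y \<noteq> None}" using Exf.prems xV by auto
  have r: "rank \<phi> \<le> m'" "bv \<phi> \<subseteq> V" using Exf.prems m by auto
  show ?case
  proof
    assume "holds t e (Exf x \<phi>)"
    then obtain w where w: "t w \<noteq> None" "holds t (e(x:=w)) \<phi>" by auto
    obtain w' where w': "t' w' \<noteq> None" "ef V m' t (pe(x:=Some w)) t' (pe'(x:=Some w'))"
      using efD1[of V m' t pe t' pe' x w] xV w(1) Exf.prems(1) m by blast
    have "holds t (e(x:=w)) \<phi> \<longleftrightarrow> holds t' (e'(x:=w')) \<phi>"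
      by (rule Exf.IH[OF w'(2) r fvs agree_upd[OF Exf.prems(5)] agree_upd[OF Exf.prems(6)]])
    then have "holds t' (e'(x:=w')) \<phi>" using w by simp
    then show "holds t' e' (Exf x \<phi>)" using w' by auto
  next
    assume "holds t' e' (Exf x \<phi>)"
    then obtain w' where w': "t' w' \<noteq> None" "holds t' (e'(x:=w')) \<phi>" by auto
    obtain w where w: "t w \<noteq> None" "ef V m' t (pe(x:=Some w)) t' (pe'(x:=Some w'))"
      using efD2[of V m' t pe t' pe' x w'] xV w'(1) Exf.prems(1) m by blast
    have "holds t (e(x:=w)) \<phi> \<longleftrightarrow> holds t' (e'(x:=w')) \<phi>"
      by (rule Exf.IH[OF w(2) r fvs agree_upd[OF Exf.prems(5)] agree_upd[OF Exf.prems(6)]])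
    then have "holds t (e(x:=w)) \<phi>" using w' by simp
    then show "holds t e (Exf x \<phi>)" using w by auto
  qed
next
  case (Negf \<phi>) then show ?case by auto
next
  case (Conjf \<phi> \<psi>)
  have "holds t e \<phi> \<longleftrightarrow> holds t' e' \<phi>" by (rule Conjf.IH(1)) (use Conjf.prems in auto)
  moreover have "holds t e \<psi> \<longleftrightarrow> holds t' e' \<psi>" by (rule Conjf.IH(2)) (use Conjf.prems in auto)
  ultimately show ?case by simp
next
  case (Eqf x y)
  have A: "atomeq V t pe t' pe'" using Eqf.prems ef_atomeq by blast
  obtain a b where ab: "x \<in> V" "y \<in> V" "pe x = Some a" "pe y = Some b" using Eqf.prems(4) by auto
  obtain a' b' where ab': "pe' x = Some a'" "pe' y = Some b'" "a = b \<longleftrightarrow> a' = b'"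
    using atomeq_at[OF A ab] by blast
  show ?case using ab ab' Eqf.prems(5,6) unfolding agree_def by simp
next
  case (Lef x y)
  have A: "atomeq V t pe t' pe'" using Lef.prems ef_atomeq by blast
  obtain a b where ab: "x \<in> V" "y \<in> V" "pe x = Some a" "pe y = Some b" using Lef.prems(4) by auto
  obtain a' b' where ab': "pe' x = Some a'" "pe' y = Some b'" "prefix a b \<longleftrightarrow> prefix a' b'"
    using atomeq_at[OF A ab] by blast
  show ?case using ab ab' Lef.prems(5,6) unfolding agree_def by simp
next
  case (Succf i x y)
  have A: "atomeq V t pe t' pe'" using Succf.prems ef_atomeq by blast
  obtain a b where ab: "x \<in> V" "y \<in> V" "pe x = Some a" "pe y = Some b" using Succf.prems(4) by auto
  obtain a' b' where ab': "pe' x = Some a'" "pe' y = Some b'" "b = a @ [i] \<longleftrightarrow> b' = a' @ [i]"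
    using atomeq_at[OF A ab] by blast
  show ?case using ab ab' Succf.prems(5,6) unfolding agree_def by simp
next
  case (Labf c x)
  have A: "atomeq V t pe t' pe'" using Labf.prems ef_atomeq by blast
  obtain a where ab: "x \<in> V" "pe x = Some a" using Labf.prems(4) by auto
  obtain a' where ab': "pe' x = Some a'" "t a = t' a'"
    using atomeq_at[OF A ab(1) ab(1) ab(2) ab(2)] by blast
  show ?case using ab ab' Labf.prems(5,6) unfolding agree_def by simp
next
  case (VarPf i x)
  have A: "atomeq V t pe t' pe'" using VarPf.prems ef_atomeq by blast
  obtain a where ab: "x \<in> V" "pe x = Some a" using VarPf.prems(4) by auto
  obtain a' where ab': "pe' x = Some a'" "t a = t' a'"
    using atomeq_at[OF A ab(1) ab(1) ab(2) ab(2)] by blast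
  show ?case using ab ab' VarPf.prems(5,6) unfolding agree_def by simp
next
  case (Rootf x)
  have A: "atomeq V t pe t' pe'" using Rootf.prems ef_atomeq by blast
  obtain a where ab: "x \<in> V" "pe x = Some a" using Rootf.prems(4) by auto
  obtain a' where ab': "pe' x = Some a'" "a = [] \<longleftrightarrow> a' = []"
    using atomeq_at[OF A ab(1) ab(1) ab(2) ab(2)] by blast
  show ?case using ab ab' Rootf.prems(5,6) unfolding agree_def by simp
qed


definition lst :: "'a set \<Rightarrow> 'a list" where "lst A = (SOME xs. set xs = A)"

lemma set_lst: "finite A \<Longrightarrow> set (lst A) = A"
  unfolding lst_def by (metis (mono_tags, lifting) finite_list someI_ex)

fun cfold :: "'a fo list \<Rightarrow> 'a fo \<Rightarrow> 'a fo" where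
  "cfold [] \<phi> = \<phi>"
| "cfold (\<psi>#\<psi>s) \<phi> = Conjf \<psi> (cfold \<psi>s \<phi>)"

lemma holds_cfold: "holds t e (cfold \<psi>s \<phi>) \<longleftrightarrow> (\<forall>\<psi>\<in>set \<psi>s. holds t e \<psi>) \<and> holds t e \<phi>"
  by (induction \<psi>s) auto
lemma rank_cfold: "rank (cfold \<psi>s \<phi>) \<le> m \<longleftrightarrow> (\<forall>\<psi>\<in>set \<psi>s. rank \<psi> \<le> m) \<and> rank \<phi> \<le> m"
  by (induction \<psi>s) auto
lemma bv_cfold: "bv (cfold \<psi>s \<phi>) = \<Union>(bv ` set \<psi>s) \<union> bv \<phi>"
  by (induction \<psi>s) auto
lemma fv_cfold: "fv (cfold \<psi>s \<phi>) = \<Union>(fv ` set \<psi>s) \<union> fv \<phi>"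
  by (induction \<psi>s) auto
lemma syms_cfold: "syms (cfold \<psi>s \<phi>) = \<Union>(syms ` set \<psi>s) \<union> syms \<phi>"
  by (induction \<psi>s) auto
lemma qvars_cfold: "qvars (cfold \<psi>s \<phi>) = \<Union>(qvars ` set \<psi>s) \<union> qvars \<phi>"
  by (induction \<psi>s) auto

lemma wf_prefix_closed: "wf_tree lin A n t \<Longrightarrow> t (w @ [i]) \<noteq> None \<Longrightarrow> t w \<noteq> None"
  unfolding wf_tree_def by blast

lemma wf_child:
  assumes "wf_tree lin A n t" "t (w @ [i]) \<noteq> None"
  shows "\<exists>a. t w = Some (Sym a) \<and> a \<in> A \<and> i < snd a"
proof -
  have tw: "t w \<noteq> None" using wf_prefix_closed[OF assms] .
  show ?thesis
  proof (cases "the (t w)")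
    case (Sym a)
    then have "t w = Some (Sym a)" using tw by auto
    then show ?thesis using assms unfolding wf_tree_def by blast
  next
    case (Var j)
    then have "t w = Some (Var j)" using tw by auto
    then have "t (w @ [i]) = None" using assms(1) unfolding wf_tree_def by blast
    then show ?thesis using assms(2) by simp
  qed
qed

lemma wf_lab:
  assumes "wf_tree lin A n t" "t w = Some l"
  shows "(\<exists>a. l = Sym a \<and> a \<in> A) \<or> (\<exists>j. l = Var j \<and> j < n)"
  using assms unfolding wf_tree_def by (cases l) auto

locale hint =
  fixes lin :: bool and Sig :: "('c \<times> nat) set" and n :: nat and V :: "nat set"
  assumes finSig: "finite Sig" and finV: "finite V" and Vne: "V \<noteq> {}"
begin

definition M :: nat where "M = Suc (Max (insert 0 (snd ` Sig)))"

lemma succ_bound: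
  assumes "wf_tree lin Sig n t" "t (a @ [i]) \<noteq> None" shows "i < M"
proof -
  obtain c where c: "c \<in> Sig" "i < snd c" using wf_child[OF assms] by blast
  have "snd c \<le> Max (insert 0 (snd ` Sig))" using c finSig by (intro Max_ge) auto
  then show ?thesis using c unfolding M_def by simp
qed

definition wfcfg :: "nat set \<Rightarrow> ('c \<times> nat) tree \<Rightarrow> penv \<Rightarrow> bool" where
  "wfcfg P t pe \<longleftrightarrow> wf_tree lin Sig n t \<and> (\<forall>x\<in>V. pe x \<noteq> None \<longleftrightarrow> x \<in> P) \<and>
     (\<forall>x a. x \<in> V \<longrightarrow> pe x = Some a \<longrightarrow> t a \<noteq> None)"

lemma wfcfg_upd: "wfcfg P t pe \<Longrightarrow> x \<in> V \<Longrightarrow> t w \<noteq> None \<Longrightarrow> wfcfg (insert x P) t (pe(x:=Some w))"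
  unfolding wfcfg_def by auto

definition Lit :: "nat set \<Rightarrow> ('c \<times> nat) fo set" where
  "Lit P = (\<lambda>(x,y). Eqf x y) ` (P \<times> P) \<union> (\<lambda>(x,y). Lef x y) ` (P \<times> P) \<union>
     (\<lambda>(i,x,y). Succf i x y) ` ({..<M} \<times> P \<times> P) \<union> (\<lambda>(c,x). Labf c x) ` (Sig \<times> P) \<union>
     (\<lambda>(i,x). VarPf i x) ` ({..<n} \<times> P) \<union> Rootf ` P"

lemma finite_Lit: "finite P \<Longrightarrow> finite (Lit P)"
  unfolding Lit_def using finSig by auto

definition good :: "nat \<Rightarrow> nat set \<Rightarrow> ('c \<times> nat) fo \<Rightarrow> bool" where
  "good m P \<phi> \<longleftrightarrow> rank \<phi> \<le> m \<and> bv \<phi> \<subseteq> V \<and> fv \<phi> \<subseteq> P \<and> syms \<phi> \<subseteq> Sig \<and> (\<forall>i\<in>qvars \<phi>. i < n)"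

lemma good_Lit: "\<phi> \<in> Lit P \<Longrightarrow> good 0 P \<phi>"
  unfolding Lit_def good_def by auto

lemma lit_atomeq:
  assumes c: "wfcfg P t pe" "wfcfg P t' pe'" "agree e pe" "agree e' pe'" "P \<subseteq> V"
    and L: "\<And>\<phi>. \<phi> \<in> Lit P \<Longrightarrow> holds t e \<phi> \<longleftrightarrow> holds t' e' \<phi>"
  shows "atomeq V t pe t' pe'"
  unfolding atomeq_def
proof (intro ballI conjI allI impI)
  fix x assume "x \<in> V"
  then have "pe x \<noteq> None \<longleftrightarrow> x \<in> P" "pe' x \<noteq> None \<longleftrightarrow> x \<in> P" using c(1,2) unfolding wfcfg_def by blast+
  then show "(pe x = None) = (pe' x = None)" by blast
next
  fix x y a a' b b' assume xy: "x \<in> V" "y \<in> V" and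
    h: "pe x = Some a" "pe' x = Some a'" "pe y = Some b" "pe' y = Some b'"
  have P: "x \<in> P" "y \<in> P" using xy h c(1) unfolding wfcfg_def by auto
  have e: "e x = a" "e y = b" "e' x = a'" "e' y = b'" using h c(3,4) unfolding agree_def by auto
  have wt: "wf_tree lin Sig n t" "wf_tree lin Sig n t'" using c unfolding wfcfg_def by auto
  have dom: "t a \<noteq> None" "t b \<noteq> None" "t' a' \<noteq> None" "t' b' \<noteq> None"
    using c(1,2) xy h unfolding wfcfg_def by auto
  show "t a = t' a'"
  proof -
    obtain l where l: "t a = Some l" using dom by auto
    from wf_lab[OF wt(1) l] show ?thesis
    proof
      assume "\<exists>c. l = Sym c \<and> c \<in> Sig"
      then obtain c where cc: "l = Sym c" "c \<in> Sig" by auto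
      have "Labf c x \<in> Lit P" using cc P unfolding Lit_def by auto
      from L[OF this] show ?thesis using l cc e by simp
    next
      assume "\<exists>j. l = Var j \<and> j < n"
      then obtain j where cc: "l = Var j" "j < n" by auto
      have "VarPf j x \<in> Lit P" using cc P unfolding Lit_def by auto
      from L[OF this] show ?thesis using l cc e by simp
    qed
  qed
  have "Rootf x \<in> Lit P" using P unfolding Lit_def by auto
  from L[OF this] show "(a = []) = (a' = [])" using e by simp
  have "Eqf x y \<in> Lit P" using P unfolding Lit_def by auto
  from L[OF this] show "(a = b) = (a' = b')" using e by simp
  have "Lef x y \<in> Lit P" using P unfolding Lit_def by auto
  from L[OF this] show "prefix a b = prefix a' b'" using e by simp
  fix i
  show "(b = a @ [i]) = (b' = a' @ [i])"
  proof (cases "i < M")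
    case True
    then have "(i,x,y) \<in> {..<M} \<times> P \<times> P" using P by auto
    then have S1: "Succf i x y \<in> (\<lambda>(i,x,y). Succf i x y) ` ({..<M} \<times> P \<times> P)"
      by (rule rev_image_eqI) simp
    have "Succf i x y \<in> Lit P" unfolding Lit_def by (rule UnI1, rule UnI1, rule UnI1, rule UnI2, rule S1)
    from L[OF this] show ?thesis using e by simp
  next
    case False
    have "b \<noteq> a @ [i]" using succ_bound[OF wt(1), of a i] dom False by auto
    moreover have "b' \<noteq> a' @ [i]" using succ_bound[OF wt(2), of a' i] dom False by auto
    ultimately show ?thesis by simp
  qed
qed

definition litf :: "nat set \<Rightarrow> ('c \<times> nat) fo set \<Rightarrow> ('c \<times> nat) fo list" where
  "litf P S = map (\<lambda>\<phi>. if \<phi> \<in> S then \<phi> else Negf \<phi>) (lst (Lit P))"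

lemma holds_litf:
  assumes "finite P"
  shows "(\<forall>\<psi>\<in>set (litf P S). holds t e \<psi>) \<longleftrightarrow> (\<forall>\<phi>\<in>Lit P. holds t e \<phi> \<longleftrightarrow> \<phi> \<in> S)"
proof -
  have s: "set (lst (Lit P)) = Lit P" using set_lst[OF finite_Lit[OF assms]] .
  show ?thesis
  proof
    assume A: "\<forall>\<psi>\<in>set (litf P S). holds t e \<psi>"
    show "\<forall>\<phi>\<in>Lit P. holds t e \<phi> \<longleftrightarrow> \<phi> \<in> S"
    proof (intro ballI)
      fix \<phi> assume "\<phi> \<in> Lit P"
      then have "(if \<phi> \<in> S then \<phi> else Negf \<phi>) \<in> set (litf P S)" unfolding litf_def set_map s by auto
      then have "holds t e (if \<phi> \<in> S then \<phi> else Negf \<phi>)" using A by blast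
      then show "holds t e \<phi> \<longleftrightarrow> \<phi> \<in> S" by (cases "\<phi> \<in> S") auto
    qed
  next
    assume B: "\<forall>\<phi>\<in>Lit P. holds t e \<phi> \<longleftrightarrow> \<phi> \<in> S"
    show "\<forall>\<psi>\<in>set (litf P S). holds t e \<psi>"
    proof
      fix \<psi> assume "\<psi> \<in> set (litf P S)"
      then obtain \<phi> where \<phi>: "\<phi> \<in> Lit P" "\<psi> = (if \<phi> \<in> S then \<phi> else Negf \<phi>)"
        unfolding litf_def set_map s by auto
      then show "holds t e \<psi>" using B by (cases "\<phi> \<in> S") auto
    qed
  qed
qed

lemma good_litf:
  assumes "finite P" "\<psi> \<in> set (litf P S)" shows "good 0 P \<psi>"
proof -
  have s: "set (lst (Lit P)) = Lit P" using set_lst[OF finite_Lit[OF assms(1)]] .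
  obtain \<phi> where \<phi>: "\<phi> \<in> Lit P" "\<psi> = (if \<phi> \<in> S then \<phi> else Negf \<phi>)"
    using assms(2) unfolding litf_def set_map s by auto
  have "good 0 P \<phi>" using good_Lit[OF \<phi>(1)] .
  then show ?thesis using \<phi>(2) unfolding good_def by auto
qed

end


context hint begin

definition v0 :: nat where "v0 = (SOME v. v \<in> V)"
lemma v0: "v0 \<in> V" unfolding v0_def using Vne by (simp add: some_in_eq)

definition TT :: "('c \<times> nat) fo" where "TT = Negf (Exf v0 (Negf (Eqf v0 v0)))"
lemma holds_TT: "holds t e TT" unfolding TT_def by simp
lemma good_TT: "good (Suc m) P TT" unfolding TT_def good_def using v0 by simp

definition xpart :: "nat \<Rightarrow> ('c \<times> nat) fo set \<Rightarrow> ('c \<times> nat) fo list" where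
  "xpart x G = map (Exf x) (lst G) @ [Negf (Exf x (cfold (map Negf (lst G)) (Eqf x x)))]"

lemma holds_xpart:
  assumes "finite G"
  shows "(\<forall>\<psi>\<in>set (xpart x G). holds t e \<psi>) \<longleftrightarrow>
    (\<forall>\<psi>\<in>G. \<exists>w. t w \<noteq> None \<and> holds t (e(x:=w)) \<psi>) \<and> (\<forall>w. t w \<noteq> None \<longrightarrow> (\<exists>\<psi>\<in>G. holds t (e(x:=w)) \<psi>))"
proof -
  have s: "set (lst G) = G" using set_lst[OF assms] .
  have "holds t e (Negf (Exf x (cfold (map Negf (lst G)) (Eqf x x)))) \<longleftrightarrow>
     (\<forall>w. t w \<noteq> None \<longrightarrow> (\<exists>\<psi>\<in>G. holds t (e(x:=w)) \<psi>))"
    apply (simp add: holds_cfold s)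
    apply (rule iffI)
     apply (intro allI impI)
     apply (erule_tac x=w in allE)
     apply auto
    done
  moreover have "(\<forall>\<psi>\<in>set (map (Exf x) (lst G)). holds t e \<psi>) \<longleftrightarrow> (\<forall>\<psi>\<in>G. \<exists>w. t w \<noteq> None \<and> holds t (e(x:=w)) \<psi>)"
    by (simp add: s)
  ultimately show ?thesis unfolding xpart_def set_append by auto
qed

lemma good_xpart:
  assumes "finite G" "\<And>\<psi>. \<psi> \<in> G \<Longrightarrow> good m (insert x P) \<psi>" "x \<in> V" "\<psi> \<in> set (xpart x G)"
  shows "good (Suc m) P \<psi>"
proof -
  have s: "set (lst G) = G" using set_lst[OF assms(1)] .
  from assms(4) consider (a) \<phi> where "\<phi> \<in> G" "\<psi> = Exf x \<phi>"
    | (b) "\<psi> = Negf (Exf x (cfold (map Negf (lst G)) (Eqf x x)))"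
    unfolding xpart_def set_append set_map s by auto
  then show ?thesis
  proof cases
    case a
    then show ?thesis using assms(2)[OF a(1)] assms(3) unfolding good_def by auto
  next
    case b
    have r: "rank (cfold (map Negf (lst G)) (Eqf x x)) \<le> m"
      unfolding rank_cfold using assms(2) s by (auto simp: good_def)
    have g: "\<forall>\<psi>\<in>G. rank \<psi> \<le> m \<and> bv \<psi> \<subseteq> V \<and> fv \<psi> \<subseteq> insert x P \<and> syms \<psi> \<subseteq> Sig \<and> (\<forall>i\<in>qvars \<psi>. i < n)"
      using assms(2) unfolding good_def by blast
    let ?c = "cfold (map Negf (lst G)) (Eqf x x)"
    have "bv ?c \<subseteq> V" unfolding bv_cfold set_map s using g by auto
    moreover have "fv ?c \<subseteq> insert x P" unfolding fv_cfold set_map s using g by auto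
    moreover have "syms ?c \<subseteq> Sig" unfolding syms_cfold set_map s using g by auto
    moreover have "\<forall>i\<in>qvars ?c. i < n" unfolding qvars_cfold set_map s using g by auto
    ultimately show ?thesis unfolding b good_def using r assms(3) by auto
  qed
qed

definition form :: "nat set \<Rightarrow> ('c \<times> nat) fo set \<Rightarrow> (nat \<Rightarrow> ('c \<times> nat) fo set) \<Rightarrow> ('c \<times> nat) fo" where
  "form P S G = cfold (litf P S @ concat (map (\<lambda>x. xpart x (G x)) (lst V))) TT"

lemma holds_form:
  assumes "finite P"
  shows "holds t e (form P S G) \<longleftrightarrow> (\<forall>\<phi>\<in>Lit P. holds t e \<phi> \<longleftrightarrow> \<phi> \<in> S) \<and>
     (\<forall>x\<in>V. \<forall>\<psi>\<in>set (xpart x (G x)). holds t e \<psi>)"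
proof -
  have s: "set (lst V) = V" using set_lst[OF finV] .
  show ?thesis unfolding form_def holds_cfold set_append holds_litf[OF assms, symmetric]
    using holds_TT s by auto
qed

lemma good_form:
  assumes "finite P" "\<And>x. x \<in> V \<Longrightarrow> finite (G x)" "\<And>x \<psi>. x \<in> V \<Longrightarrow> \<psi> \<in> G x \<Longrightarrow> good m (insert x P) \<psi>"
  shows "good (Suc m) P (form P S G)"
proof -
  have s: "set (lst V) = V" using set_lst[OF finV] .
  have A: "good (Suc m) P \<psi>" if "\<psi> \<in> set (litf P S @ concat (map (\<lambda>x. xpart x (G x)) (lst V)))" for \<psi>
  proof -
    from that consider "\<psi> \<in> set (litf P S)" | x where "x \<in> V" "\<psi> \<in> set (xpart x (G x))"
      using s by auto
    then show ?thesis
    proof cases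
      case 1 then show ?thesis using good_litf[OF assms(1)] unfolding good_def by fastforce
    next
      case 2 then show ?thesis using good_xpart[OF assms(2)[OF 2(1)] assms(3)[OF 2(1)] 2] by blast
    qed
  qed
  have B: "good (Suc m) P TT" by (rule good_TT)
  show ?thesis unfolding form_def good_def rank_cfold bv_cfold fv_cfold syms_cfold qvars_cfold
    using A B unfolding good_def by blast
qed

end


context hint begin

definition cover :: "nat set \<Rightarrow> ('c \<times> nat) fo set \<Rightarrow> bool" where
  "cover P H \<longleftrightarrow> (\<forall>t pe e. wfcfg P t pe \<and> agree e pe \<longrightarrow> (\<exists>\<chi>\<in>H. holds t e \<chi>))"

definition sep :: "nat \<Rightarrow> nat set \<Rightarrow> ('c \<times> nat) fo set \<Rightarrow> bool" where
  "sep m P H \<longleftrightarrow> (\<forall>\<chi>\<in>H. \<forall>t pe e t' pe' e'. wfcfg P t pe \<and> agree e pe \<and> wfcfg P t' pe' \<and> agree e' pe' \<and>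
      holds t e \<chi> \<and> holds t' e' \<chi> \<longrightarrow> ef V m t pe t' pe')"

lemma hintikka:
  "P \<subseteq> V \<Longrightarrow> (m = 0 \<longrightarrow> P \<noteq> {}) \<Longrightarrow> \<exists>H. finite H \<and> (\<forall>\<chi>\<in>H. good m P \<chi>) \<and> cover P H \<and> sep m P H"
proof (induction m arbitrary: P)
  case 0
  have finP: "finite P" using 0 finV finite_subset by blast
  define p where "p = (SOME p. p \<in> P)"
  have p: "p \<in> P" unfolding p_def using 0 by (simp add: some_in_eq)
  define H where "H = (\<lambda>S. cfold (litf P S) (Eqf p p)) ` Pow (Lit P)"
  have "finite H" unfolding H_def using finite_Lit[OF finP] by simp
  moreover have "\<forall>\<chi>\<in>H. good 0 P \<chi>"
  proof
    fix \<chi> assume "\<chi> \<in> H"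
    then obtain S where S: "\<chi> = cfold (litf P S) (Eqf p p)" unfolding H_def by auto
    have g: "\<forall>\<psi>\<in>set (litf P S). good 0 P \<psi>" using good_litf[OF finP] by blast
    then show "good 0 P \<chi>" unfolding S good_def rank_cfold bv_cfold fv_cfold syms_cfold qvars_cfold
      using p by (auto simp: good_def)
  qed
  moreover have "cover P H" unfolding cover_def
  proof (intro allI impI)
    fix t pe e assume "wfcfg P t pe \<and> agree e pe"
    let ?S = "{\<phi>\<in>Lit P. holds t e \<phi>}"
    have "holds t e (cfold (litf P ?S) (Eqf p p))" unfolding holds_cfold holds_litf[OF finP] by auto
    moreover have "cfold (litf P ?S) (Eqf p p) \<in> H" unfolding H_def by auto
    ultimately show "\<exists>\<chi>\<in>H. holds t e \<chi>" by blast
  qed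
  moreover have "sep 0 P H" unfolding sep_def
  proof (intro ballI allI impI)
    fix \<chi> t pe e t' pe' e'
    assume \<chi>: "\<chi> \<in> H" and h: "wfcfg P t pe \<and> agree e pe \<and> wfcfg P t' pe' \<and> agree e' pe' \<and> holds t e \<chi> \<and> holds t' e' \<chi>"
    then obtain S where S: "\<chi> = cfold (litf P S) (Eqf p p)" unfolding H_def by auto
    have "\<forall>\<phi>\<in>Lit P. holds t e \<phi> \<longleftrightarrow> \<phi> \<in> S" using h unfolding S holds_cfold holds_litf[OF finP] by blast
    moreover have "\<forall>\<phi>\<in>Lit P. holds t' e' \<phi> \<longleftrightarrow> \<phi> \<in> S" using h unfolding S holds_cfold holds_litf[OF finP] by blast
    ultimately have "atomeq V t pe t' pe'" using lit_atomeq[of P t pe t' pe' e e'] h 0 by blast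
    then show "ef V 0 t pe t' pe'" by simp
  qed
  ultimately show ?case by blast
next
  case (Suc m)
  have finP: "finite P" using Suc finV finite_subset by blast
  have "\<forall>x\<in>V. \<exists>H. finite H \<and> (\<forall>\<chi>\<in>H. good m (insert x P) \<chi>) \<and> cover (insert x P) H \<and> sep m (insert x P) H"
    using Suc.IH Suc.prems by auto
  then obtain Hf where Hf: "\<forall>x\<in>V. finite (Hf x) \<and> (\<forall>\<chi>\<in>Hf x. good m (insert x P) \<chi>) \<and> cover (insert x P) (Hf x) \<and> sep m (insert x P) (Hf x)"
    by (rule bchoice[THEN exE]) blast
  define H where "H = (\<lambda>(S, G). form P S G) ` (Pow (Lit P) \<times> PiE V (\<lambda>x. Pow (Hf x)))"
  have "finite H" unfolding H_def using finite_Lit[OF finP] Hf finV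
    by (intro finite_imageI finite_cartesian_product finite_PiE) auto
  moreover have "\<forall>\<chi>\<in>H. good (Suc m) P \<chi>"
  proof
    fix \<chi> assume "\<chi> \<in> H"
    then obtain S G where SG: "\<chi> = form P S G" "G \<in> PiE V (\<lambda>x. Pow (Hf x))" unfolding H_def by auto
    have G: "\<And>x. x \<in> V \<Longrightarrow> G x \<subseteq> Hf x" using SG(2) by (auto simp: PiE_def Pi_def)
    show "good (Suc m) P \<chi>" unfolding SG(1)
    proof (rule good_form[OF finP])
      show "\<And>x. x \<in> V \<Longrightarrow> finite (G x)" using G Hf finite_subset by blast
      show "\<And>x \<psi>. x \<in> V \<Longrightarrow> \<psi> \<in> G x \<Longrightarrow> good m (insert x P) \<psi>" using G Hf by blast
    qed
  qed
  moreover have "cover P H" unfolding cover_def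
  proof (intro allI impI)
    fix t pe e assume h: "wfcfg P t pe \<and> agree e pe"
    let ?S = "{\<phi>\<in>Lit P. holds t e \<phi>}"
    define G where "G = (\<lambda>x\<in>V. {\<psi>\<in>Hf x. \<exists>w. t w \<noteq> None \<and> holds t (e(x:=w)) \<psi>})"
    have GP: "G \<in> PiE V (\<lambda>x. Pow (Hf x))" unfolding G_def by auto
    have finG: "\<And>x. x \<in> V \<Longrightarrow> finite (G x)" unfolding G_def using Hf by auto
    have "holds t e (form P ?S G)"
      unfolding holds_form[OF finP]
    proof (intro conjI ballI)
      show "\<And>\<phi>. \<phi> \<in> Lit P \<Longrightarrow> holds t e \<phi> = (\<phi> \<in> ?S)" by auto
    next
      fix x \<psi> assume x: "x \<in> V" and \<psi>: "\<psi> \<in> set (xpart x (G x))"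
      have "(\<forall>\<psi>\<in>G x. \<exists>w. t w \<noteq> None \<and> holds t (e(x:=w)) \<psi>) \<and> (\<forall>w. t w \<noteq> None \<longrightarrow> (\<exists>\<psi>\<in>G x. holds t (e(x:=w)) \<psi>))"
      proof (intro conjI ballI allI impI)
        fix \<psi> assume "\<psi> \<in> G x" then show "\<exists>w. t w \<noteq> None \<and> holds t (e(x:=w)) \<psi>" unfolding G_def using x by auto
      next
        fix w assume w: "t w \<noteq> None"
        have "wfcfg (insert x P) t (pe(x:=Some w))" using wfcfg_upd h x w by blast
        moreover have "agree (e(x:=w)) (pe(x:=Some w))" using agree_upd h by blast
        ultimately obtain \<chi> where "\<chi> \<in> Hf x" "holds t (e(x:=w)) \<chi>" using Hf x unfolding cover_def by blast
        then show "\<exists>\<psi>\<in>G x. holds t (e(x:=w)) \<psi>" unfolding G_def using x w by auto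
      qed
      then show "holds t e \<psi>" using holds_xpart[OF finG[OF x]] \<psi> by blast
    qed
    moreover have "form P ?S G \<in> H" unfolding H_def using GP by auto
    ultimately show "\<exists>\<chi>\<in>H. holds t e \<chi>" by blast
  qed
  moreover have "sep (Suc m) P H" unfolding sep_def
  proof (intro ballI allI impI)
    fix \<chi> t pe e t' pe' e'
    assume \<chi>: "\<chi> \<in> H" and h: "wfcfg P t pe \<and> agree e pe \<and> wfcfg P t' pe' \<and> agree e' pe' \<and> holds t e \<chi> \<and> holds t' e' \<chi>"
    then obtain S G where SG: "\<chi> = form P S G" "G \<in> PiE V (\<lambda>x. Pow (Hf x))" unfolding H_def by auto
    have G: "\<And>x. x \<in> V \<Longrightarrow> G x \<subseteq> Hf x" using SG(2) by (auto simp: PiE_def Pi_def)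
    have finG: "\<And>x. x \<in> V \<Longrightarrow> finite (G x)" using G Hf finite_subset by blast
    have F1: "(\<forall>\<phi>\<in>Lit P. holds t e \<phi> \<longleftrightarrow> \<phi> \<in> S) \<and> (\<forall>x\<in>V. \<forall>\<psi>\<in>set (xpart x (G x)). holds t e \<psi>)"
      using h unfolding SG(1) holds_form[OF finP] by blast
    have F2: "(\<forall>\<phi>\<in>Lit P. holds t' e' \<phi> \<longleftrightarrow> \<phi> \<in> S) \<and> (\<forall>x\<in>V. \<forall>\<psi>\<in>set (xpart x (G x)). holds t' e' \<psi>)"
      using h unfolding SG(1) holds_form[OF finP] by blast
    have X1: "(\<forall>\<psi>\<in>G x. \<exists>w. t w \<noteq> None \<and> holds t (e(x:=w)) \<psi>) \<and> (\<forall>w. t w \<noteq> None \<longrightarrow> (\<exists>\<psi>\<in>G x. holds t (e(x:=w)) \<psi>))"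
      if x: "x \<in> V" for x
    proof -
      have "\<forall>\<psi>\<in>set (xpart x (G x)). holds t e \<psi>" using F1 x by blast
      then show ?thesis by (simp only: holds_xpart[OF finG[OF x]])
    qed
    have X2: "(\<forall>\<psi>\<in>G x. \<exists>w. t' w \<noteq> None \<and> holds t' (e'(x:=w)) \<psi>) \<and> (\<forall>w. t' w \<noteq> None \<longrightarrow> (\<exists>\<psi>\<in>G x. holds t' (e'(x:=w)) \<psi>))"
      if x: "x \<in> V" for x
    proof -
      have "\<forall>\<psi>\<in>set (xpart x (G x)). holds t' e' \<psi>" using F2 x by blast
      then show ?thesis by (simp only: holds_xpart[OF finG[OF x]])
    qed
    have A: "atomeq V t pe t' pe'" using lit_atomeq[of P t pe t' pe' e e'] h Suc.prems F1 F2 by blast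
    show "ef V (Suc m) t pe t' pe'"
    proof (rule efI[OF A])
      fix x w assume x: "x \<in> V" and w: "t w \<noteq> None"
      obtain \<psi> where \<psi>: "\<psi> \<in> G x" "holds t (e(x:=w)) \<psi>" using X1[OF x] w by blast
      obtain w' where w': "t' w' \<noteq> None" "holds t' (e'(x:=w')) \<psi>" using X2[OF x] \<psi>(1) by blast
      have "sep m (insert x P) (Hf x)" using Hf x by blast
      moreover have "\<psi> \<in> Hf x" using G x \<psi> by blast
      ultimately have "ef V m t (pe(x:=Some w)) t' (pe'(x:=Some w'))"
        unfolding sep_def using wfcfg_upd agree_upd h x w w' \<psi>(2) by blast
      then show "\<exists>w'. t' w' \<noteq> None \<and> ef V m t (pe(x:=Some w)) t' (pe'(x:=Some w'))" using w' by blast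
    next
      fix x w' assume x: "x \<in> V" and w': "t' w' \<noteq> None"
      obtain \<psi> where \<psi>: "\<psi> \<in> G x" "holds t' (e'(x:=w')) \<psi>" using X2[OF x] w' by blast
      obtain w where w: "t w \<noteq> None" "holds t (e(x:=w)) \<psi>" using X1[OF x] \<psi>(1) by blast
      have "sep m (insert x P) (Hf x)" using Hf x by blast
      moreover have "\<psi> \<in> Hf x" using G x \<psi> by blast
      ultimately have "ef V m t (pe(x:=Some w)) t' (pe'(x:=Some w'))"
        unfolding sep_def using wfcfg_upd agree_upd h x w w' \<psi>(2) by blast
      then show "\<exists>w. t w \<noteq> None \<and> ef V m t (pe(x:=Some w)) t' (pe'(x:=Some w'))" using w by blast
    qed
  qed
  ultimately show ?case by blast
qed

end


type_synonym 'c ttree = "(('c \<times> nat) tree \<times> nat) tree"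

definition leafy :: "'a tree \<Rightarrow> bool" where
  "leafy t \<longleftrightarrow> (\<forall>w i. t (w @ [i]) \<noteq> None \<longrightarrow> t w \<noteq> None) \<and> (\<forall>w j i. t w = Some (Var j) \<longrightarrow> t (w @ [i]) = None)"

lemma leafy_dom_app: "leafy t \<Longrightarrow> t (p @ z) \<noteq> None \<Longrightarrow> t p \<noteq> None"
proof (induction z rule: rev_induct)
  case Nil then show ?case by simp
next
  case (snoc i z)
  then have "t ((p @ z) @ [i]) \<noteq> None" by simp
  then have "t (p @ z) \<noteq> None" using snoc.prems(1) unfolding leafy_def by blast
  then show ?case using snoc by blast
qed

lemma leafy_dom_prefix: "leafy t \<Longrightarrow> t q \<noteq> None \<Longrightarrow> prefix p q \<Longrightarrow> t p \<noteq> None"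
  using leafy_dom_app by (metis prefixE)

lemma leafy_leaf: 
  assumes "leafy t" "t p = Some (Var j)" "prefix p q" "t q \<noteq> None" shows "p = q"
proof (rule ccontr)
  assume "p \<noteq> q"
  obtain z where q: "q = p @ z" using assms(3) by (auto elim: prefixE)
  with \<open>p \<noteq> q\<close> obtain i z' where z: "z = i # z'" by (cases z) auto
  have "t ((p @ [i]) @ z') \<noteq> None" using assms(4) q z by simp
  then have "t (p @ [i]) \<noteq> None" using leafy_dom_app[OF assms(1)] by blast
  moreover have "t (p @ [i]) = None" using assms(1,2) unfolding leafy_def by blast
  ultimately show False by simp
qed

lemma wf_leafy: "wf_tree lin A n t \<Longrightarrow> leafy t"
  unfolding wf_tree_def leafy_def by blast

definition cmp :: "'c ttree \<Rightarrow> nat list \<Rightarrow> ('c \<times> nat) tree" where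
  "cmp S u = (case S u of Some (Sym (T, k)) \<Rightarrow> T
     | Some (Var j) \<Rightarrow> (\<lambda>w. if w = [] then Some (Var j) else None) | None \<Rightarrow> (\<lambda>_. None))"

definition issym :: "'c ttree \<Rightarrow> nat list \<Rightarrow> bool" where
  "issym S u \<longleftrightarrow> (\<exists>a. S u = Some (Sym a))"

definition goodS :: "'c ttree \<Rightarrow> bool" where
  "goodS S \<longleftrightarrow> (\<forall>u. leafy (cmp S u) \<and> (issym S u \<longrightarrow> (\<exists>c. cmp S u [] = Some (Sym c))))"

lemma cmp_Sym: "S u = Some (Sym (T, k)) \<Longrightarrow> cmp S u = T"
  unfolding cmp_def by simp

lemma cmp_Var: "S u = Some (Var j) \<Longrightarrow> cmp S u = (\<lambda>w. if w = [] then Some (Var j) else None)"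
  unfolding cmp_def by simp

lemma cmp_None: "S u = None \<Longrightarrow> cmp S u = (\<lambda>_. None)"
  unfolding cmp_def by simp

lemma wf_goodS:
  assumes "wf_tree lin (trees_sorted lin Sig) n S"
  shows "goodS S"
  unfolding goodS_def
proof (intro allI conjI impI)
  fix u
  show "leafy (cmp S u)"
  proof (cases "S u")
    case None then show ?thesis by (simp add: cmp_None leafy_def)
  next
    case (Some l)
    then show ?thesis
    proof (cases l)
      case (Sym a)
      obtain T k where a: "a = (T, k)" by (cases a)
      have "a \<in> trees_sorted lin Sig" using assms Some Sym unfolding wf_tree_def by blast
      then have "wf_tree lin Sig k T" unfolding trees_sorted_def a by simp
      then show ?thesis using cmp_Sym[of S u T k] Some Sym a wf_leafy by simp
    next
      case (Var j)
      then show ?thesis using Some by (simp add: cmp_Var leafy_def)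
    qed
  qed
next
  fix u assume "issym S u"
  then obtain T k where Su: "S u = Some (Sym (T, k))" unfolding issym_def by auto
  have "(T, k) \<in> trees_sorted lin Sig" using assms Su unfolding wf_tree_def by blast
  then have "wf_tree lin Sig k T" unfolding trees_sorted_def by simp
  then show "\<exists>c. cmp S u [] = Some (Sym c)" using cmp_Sym[of S u T k, OF Su] unfolding wf_tree_def by auto
qed

fun valid :: "'c ttree \<Rightarrow> nat list \<Rightarrow> nat list list \<Rightarrow> bool" where
  "valid S u [] = False"
| "valid S u [p] = (cmp S u p \<noteq> None \<and> (issym S u \<longrightarrow> (\<exists>c. cmp S u p = Some (Sym c))))"
| "valid S u (p # q # r) = (issym S u \<and> (\<exists>i. cmp S u p = Some (Var i) \<and> valid S (u @ [i]) (q # r)))"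

fun vix :: "'a lab option \<Rightarrow> nat" where
  "vix (Some (Var i)) = i"
| "vix _ = 0"

fun vtx :: "'c ttree \<Rightarrow> nat list \<Rightarrow> nat list list \<Rightarrow> nat \<Rightarrow> nat list" where
  "vtx S u a 0 = u"
| "vtx S u [] (Suc j) = u"
| "vtx S u (p # r) (Suc j) = vtx S (u @ [vix (cmp S u p)]) r j"

definition flab :: "'c ttree \<Rightarrow> nat list \<Rightarrow> nat list list \<Rightarrow> ('c \<times> nat) lab option" where
  "flab S u a = cmp S (vtx S u a (length a - 1)) (last a)"

lemma vtx_take: "take j a = take j b \<Longrightarrow> vtx S u a j = vtx S u b j"
proof (induction j arbitrary: u a b)
  case 0 then show ?case by simp
next
  case (Suc j)
  show ?case
  proof (cases a)
    case Nil
    then have "take (Suc j) b = []" using Suc.prems by simp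
    then have "b = []" by simp
    then show ?thesis using Nil by simp
  next
    case (Cons p r)
    have "take (Suc j) b = p # take j r" using Suc.prems Cons by simp
    then have "b \<noteq> []" by (metis list.simps(3) take_Nil)
    then obtain p' r' where b: "b = p' # r'" by (meson neq_Nil_conv)
    then have "p = p'" "take j r = take j r'" using Suc.prems Cons by simp_all
    have "vtx S (u @ [vix (cmp S u p)]) r j = vtx S (u @ [vix (cmp S u p)]) r' j"
      by (rule Suc.IH) fact
    then show ?thesis using Cons b \<open>p = p'\<close> by simp
  qed
qed

lemma vtx_Suc: "j < length a \<Longrightarrow> vtx S u a (Suc j) = vtx S u a j @ [vix (cmp S (vtx S u a j) (a ! j))]"
proof (induction j arbitrary: u a)
  case 0 then show ?case by (cases a) auto
next
  case (Suc j)
  then obtain p r where "a = p # r" by (cases a) auto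
  then show ?case using Suc by simp
qed

lemma vtx_snoc: "vtx S u (b @ [p]) (Suc (length b)) = vtx S u b (length b) @ [vix (cmp S (vtx S u b (length b)) p)]"
proof -
  have "vtx S u (b @ [p]) (Suc (length b)) = vtx S u (b @ [p]) (length b) @ [vix (cmp S (vtx S u (b @ [p]) (length b)) ((b @ [p]) ! length b))]"
    by (rule vtx_Suc) simp
  moreover have "vtx S u (b @ [p]) (length b) = vtx S u b (length b)" by (rule vtx_take) simp
  ultimately show ?thesis by simp
qed

definition vcond :: "'c ttree \<Rightarrow> nat list \<Rightarrow> nat list list \<Rightarrow> nat \<Rightarrow> bool" where
  "vcond S u a j \<longleftrightarrow> (let v = vtx S u a j in
     (Suc j < length a \<longrightarrow> issym S v \<and> (\<exists>i. cmp S v (a ! j) = Some (Var i))) \<and>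
     (Suc j = length a \<longrightarrow> cmp S v (a ! j) \<noteq> None \<and> (issym S v \<longrightarrow> (\<exists>c. cmp S v (a ! j) = Some (Sym c)))))"

lemma valid_iff: "valid S u a \<longleftrightarrow> a \<noteq> [] \<and> (\<forall>j<length a. vcond S u a j)"
proof (induction S u a rule: valid.induct)
  case (1 S u) then show ?case by simp
next
  case (2 S u p) then show ?case by (simp add: vcond_def)
next
  case (3 S u p q r)
  show ?case
  proof
    assume v: "valid S u (p # q # r)"
    then obtain i where i: "issym S u" "cmp S u p = Some (Var i)" "valid S (u @ [i]) (q # r)" by auto
    have IH: "\<forall>j<length (q # r). vcond S (u @ [i]) (q # r) j" using 3 i by auto
    show "p # q # r \<noteq> [] \<and> (\<forall>j<length (p # q # r). vcond S u (p # q # r) j)"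
    proof (intro conjI allI impI)
      fix j assume j: "j < length (p # q # r)"
      show "vcond S u (p # q # r) j"
      proof (cases j)
        case 0 then show ?thesis using i by (simp add: vcond_def)
      next
        case (Suc j')
        then have "vcond S (u @ [i]) (q # r) j'" using IH j by simp
        then show ?thesis using Suc i by (simp add: vcond_def)
      qed
    qed simp
  next
    assume h: "p # q # r \<noteq> [] \<and> (\<forall>j<length (p # q # r). vcond S u (p # q # r) j)"
    have "vcond S u (p # q # r) 0" using h by auto
    then obtain i where i: "issym S u" "cmp S u p = Some (Var i)" by (auto simp: vcond_def)
    have "\<forall>j<length (q # r). vcond S (u @ [i]) (q # r) j"
    proof (intro allI impI)
      fix j assume "j < length (q # r)"
      then have "vcond S u (p # q # r) (Suc j)" using h by auto
      then show "vcond S (u @ [i]) (q # r) j" using i by (simp add: vcond_def)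
    qed
    then have "valid S (u @ [i]) (q # r)" using 3 i by auto
    then show "valid S u (p # q # r)" using i by auto
  qed
qed


lemma valid_vcond: "valid S u a \<Longrightarrow> j < length a \<Longrightarrow> vcond S u a j"
  using valid_iff by blast

lemma valid_ne: "valid S u a \<Longrightarrow> a \<noteq> []"
  using valid_iff by blast

lemma valid_leaf_ne:
  assumes "goodS S" "valid S u a" "Suc j < length a" shows "a ! j \<noteq> []"
proof
  assume h: "a ! j = []"
  have "vcond S u a j" using valid_vcond[OF assms(2)] assms(3) by simp
  then obtain i where "issym S (vtx S u a j)" "cmp S (vtx S u a j) (a ! j) = Some (Var i)"
    using assms(3) unfolding vcond_def Let_def by auto
  then show False using assms(1) h unfolding goodS_def by force
qed

lemma concat_take_nth:
  assumes "k < length b"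
  shows "concat b = concat (take k b) @ b ! k @ concat (drop (Suc k) b)"
proof -
  have "b = take k b @ [b ! k] @ drop (Suc k) b" using assms by (simp add: id_take_nth_drop)
  then show ?thesis by (metis concat.simps(2) concat_append append_Nil2 concat.simps(1) append.assoc)
qed

lemma concat_last:
  assumes "a \<noteq> []"
  shows "concat a = concat (take (length a - 1) a) @ a ! (length a - 1)"
  using concat_take_nth[of "length a - 1" a] assms by simp

lemma go_valid:
  assumes "goodS S" "valid S u a" "length a \<le> f"
  shows "go f S u (concat a) = flab S u a"
  using assms
proof (induction S u a arbitrary: f rule: valid.induct)
  case (1 S u) then show ?case by simp
next
  case (2 S u p)
  then obtain f' where f: "f = Suc f'" by (cases f) auto
  show ?case
  proof (cases "S u")
    case None then show ?thesis using 2 by (simp add: cmp_None)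
  next
    case (Some l)
    show ?thesis
    proof (cases l)
      case (Sym a0)
      obtain T k where a0: "a0 = (T, k)" by (cases a0)
      have Su: "S u = Some (Sym (T, k))" using Some Sym a0 by simp
      have "issym S u" using Su unfolding issym_def by auto
      then obtain c where "T p = Some (Sym c)" using 2 cmp_Sym[of S u T k, OF Su] by auto
      then show ?thesis using Su f by (simp add: flab_def cmp_Sym)
    next
      case (Var j)
      have Su: "S u = Some (Var j)" using Some Var by simp
      then have "p = []" using 2 by (simp add: cmp_Var split: if_splits)
      then show ?thesis using Su f by (simp add: flab_def cmp_Var)
    qed
  qed
next
  case (3 S u p q r)
  then obtain f' where f: "f = Suc f'" by (cases f) auto
  obtain i where i: "issym S u" "cmp S u p = Some (Var i)" "valid S (u @ [i]) (q # r)" using 3 by auto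
  obtain T k where Su: "S u = Some (Sym (T, k))" using i(1) unfolding issym_def by auto
  have Tc: "cmp S u = T" using cmp_Sym[of S u T k, OF Su] .
  have gS: "goodS S" using 3 by blast
  have lf: "leafy T" using gS Tc unfolding goodS_def by metis
  obtain c0 where root: "T [] = Some (Sym c0)" using gS Tc i(1) unfolding goodS_def by metis
  have Tp: "T p = Some (Var i)" using i Tc by simp
  have pne: "p \<noteq> []" using Tp root by auto
  define w where "w = p @ concat (q # r)"
  have Tw: "\<not> (\<exists>c. T w = Some (Sym c))"
  proof
    assume "\<exists>c. T w = Some (Sym c)"
    then have "T w \<noteq> None" by auto
    then have "p = w" using leafy_leaf[OF lf Tp, of w] unfolding w_def by simp
    then show False using Tp \<open>\<exists>c. T w = Some (Sym c)\<close> by simp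
  qed
  have fnd: "find (\<lambda>l. is_var (T (take l w))) [1..<Suc (length w)] = Some (length p)"
    unfolding find_Some_iff
  proof (intro exI[of _ "length p - 1"] conjI allI impI)
    have "length p \<le> length w" unfolding w_def by simp
    then show "length p - 1 < length [1..<Suc (length w)]" using pne by (cases p) auto
    have "length p \<le> length w" unfolding w_def by simp
    then have e: "[1..<Suc (length w)] ! (length p - 1) = length p" using pne
      by (subst nth_upt) (cases p, auto)
    show "is_var (T (take ([1..<Suc (length w)] ! (length p - 1)) w))"
    proof -
      have "take (length p) w = p" unfolding w_def by simp
      then show ?thesis unfolding e using Tp by (simp add: is_var_def)
    qed
    show "length p = [1..<Suc (length w)] ! (length p - 1)" using e by simp
  next
    fix j assume j: "j < length p - 1"
    have "length p \<le> length w" unfolding w_def by simp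
    then have e: "[1..<Suc (length w)] ! j = Suc j" using j by (subst nth_upt) auto
    have tk: "take (Suc j) w = take (Suc j) p" using j unfolding w_def by simp
    show "\<not> is_var (T (take ([1..<Suc (length w)] ! j) w))"
    proof
      assume "is_var (T (take ([1..<Suc (length w)] ! j) w))"
      then have "is_var (T (take (Suc j) p))" unfolding e tk .
      then obtain i' where ti: "T (take (Suc j) p) = Some (Var i')" unfolding is_var_def by auto
      have "take (Suc j) p = p" by (rule leafy_leaf[OF lf ti take_is_prefix]) (use Tp in simp)
      then have "length (take (Suc j) p) = length p" by simp
      then show False using j by simp
    qed
  qed
  have tk: "take (length p) w = p" "drop (length p) w = concat (q # r)" unfolding w_def by simp_all
  have go1: "go (Suc f') S u w = go f' S (u @ [i]) (concat (q # r))"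
  proof (cases "T w")
    case None then show ?thesis using Su fnd tk Tp by simp
  next
    case (Some l)
    then obtain j where "l = Var j" using Tw by (cases l) auto
    then show ?thesis using Su fnd tk Tp Some by simp
  qed
  have IH: "go f' S (u @ [i]) (concat (q # r)) = flab S (u @ [i]) (q # r)"
    using 3(1)[of i f'] i 3(2-) f by auto
  have "flab S u (p # q # r) = flab S (u @ [i]) (q # r)"
    unfolding flab_def using i(2) by simp
  then show ?case using go1 IH f unfolding w_def by simp
qed

lemma valid_length_bound:
  assumes "goodS S" "valid S u a" shows "length a \<le> Suc (length (concat a))"
  using assms
proof (induction S u a rule: valid.induct)
  case (3 S u p q r)
  obtain i where i: "issym S u" "cmp S u p = Some (Var i)" "valid S (u @ [i]) (q # r)" using 3 by auto
  have "p \<noteq> []" using i 3(2) unfolding goodS_def by force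
  then have "length p \<ge> 1" by (cases p) auto
  then show ?case using 3(1)[of i, OF 3(2) i(3)] by simp
qed auto

lemma flat_valid:
  assumes "goodS S" "valid S [] a"
  shows "flat S (concat a) = flab S [] a"
  unfolding flat_def by (rule go_valid[OF assms valid_length_bound[OF assms]])

lemma go_some_valid:
  "go f S u w \<noteq> None \<Longrightarrow> \<exists>a. valid S u a \<and> concat a = w"
proof (induction f arbitrary: u w)
  case 0 then show ?case by simp
next
  case (Suc f)
  show ?case
  proof (cases "S u")
    case None then show ?thesis using Suc.prems by simp
  next
    case (Some l)
    show ?thesis
    proof (cases l)
      case (Var j)
      have Su: "S u = Some (Var j)" using Some Var by simp
      then have "w = []" using Suc.prems by (simp split: if_splits)
      moreover have "valid S u [[]]" using Su by (simp add: cmp_Var issym_def)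
      ultimately show ?thesis by (intro exI[of _ "[[]]"]) simp
    next
      case (Sym a0)
      obtain T k where a0: "a0 = (T, k)" by (cases a0)
      have Su: "S u = Some (Sym (T, k))" using Some Sym a0 by simp
      have Tc: "cmp S u = T" using cmp_Sym[of S u T k, OF Su] .
      have iss: "issym S u" using Su unfolding issym_def by auto
      show ?thesis
      proof (cases "\<exists>c. T w = Some (Sym c)")
        case True
        then have "valid S u [w]" using Tc iss by auto
        then show ?thesis by (intro exI[of _ "[w]"]) simp
      next
        case False
        define X where "X = (case find (\<lambda>l. is_var (T (take l w))) [1..<Suc (length w)] of
                None \<Rightarrow> None
              | Some l \<Rightarrow> (case T (take l w) of
                            Some (Var i) \<Rightarrow> go f S (u @ [i]) (drop l w)
                          | _ \<Rightarrow> None))"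
        have goX: "go (Suc f) S u w = X"
        proof (cases "T w")
          case None then show ?thesis using Su unfolding X_def by simp
        next
          case (Some l)
          then obtain j where "l = Var j" using False by (cases l) auto
          then show ?thesis using Su Some unfolding X_def by simp
        qed
        then have "X \<noteq> None" using Suc.prems by simp
        then obtain l where l: "find (\<lambda>l. is_var (T (take l w))) [1..<Suc (length w)] = Some l"
          unfolding X_def by (auto split: option.splits)
        then have X2: "X = (case T (take l w) of Some (Var i) \<Rightarrow> go f S (u @ [i]) (drop l w) | _ \<Rightarrow> None)"
          unfolding X_def by simp
        have "is_var (T (take l w))" using l unfolding find_Some_iff by auto
        then obtain i where Ti: "T (take l w) = Some (Var i)" unfolding is_var_def by auto
        then have "go f S (u @ [i]) (drop l w) \<noteq> None" using X2 \<open>X \<noteq> None\<close> by simp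
        then obtain a' where a': "valid S (u @ [i]) a'" "concat a' = drop l w" using Suc.IH by blast
        then obtain q r where qr: "a' = q # r" by (cases a') auto
        have "valid S u (take l w # q # r)" using a' qr Ti Tc iss by auto
        moreover have "concat (take l w # q # r) = w" using a' qr by simp
        ultimately show ?thesis by blast
      qed
    qed
  qed
qed

lemma flat_some_valid: "flat S w \<noteq> None \<Longrightarrow> \<exists>a. valid S [] a \<and> concat a = w"
  unfolding flat_def using go_some_valid by blast


lemma goodS_leafy: "goodS S \<Longrightarrow> leafy (cmp S u)"
  unfolding goodS_def by blast

lemma prefix_concat:
  assumes "goodS S" "valid S u a" "valid S u b" "prefix (concat a) (concat b)"
  shows "take (length a - 1) a = take (length a - 1) b \<and> length a - 1 < length b \<and>
         prefix (a ! (length a - 1)) (b ! (length a - 1))"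
  using assms(2-)
proof (induction a arbitrary: u b)
  case Nil then show ?case by simp
next
  case (Cons p r)
  have lf: "\<And>u. leafy (cmp S u)" using goodS_leafy[OF assms(1)] .
  obtain p' r' where b: "b = p' # r'" using Cons.prems(2) by (cases b) auto
  show ?case
  proof (cases r)
    case Nil
    have cp: "cmp S u p \<noteq> None" using Cons.prems(1) Nil by simp
    have pre: "prefix p (p' @ concat r')" using Cons.prems(3) Nil b by simp
    have "prefix p p'"
    proof (cases r')
      case Nil then show ?thesis using pre by simp
    next
      case (Cons q' r0')
      then obtain i' where i': "cmp S u p' = Some (Var i')" using Cons.prems(2) b by auto
      have pp': "prefix p' (p' @ concat r')" by simp
      from prefix_same_cases[OF pre pp'] show ?thesis
      proof
        assume "prefix p' p"
        then have "p' = p" using leafy_leaf[OF lf i'] cp by blast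
        then show ?thesis by simp
      qed simp
    qed
    then show ?thesis using Nil b by simp
  next
    case (Cons q r0)
    obtain i where i: "issym S u" "cmp S u p = Some (Var i)" "valid S (u @ [i]) (q # r0)"
      using Cons.prems(1) \<open>r = q # r0\<close> by auto
    have pre: "prefix (p @ concat r) (p' @ concat r')" using Cons.prems(3) b by simp
    show ?thesis
    proof (cases r')
      case Nil
      have cp': "cmp S u p' \<noteq> None" "\<exists>c. cmp S u p' = Some (Sym c)" using Cons.prems(2) b Nil i(1) by auto
      have "prefix p p'" using pre Nil by (simp add: append_prefixD)
      then have "p = p'" using leafy_leaf[OF lf i(2)] cp' by blast
      then show ?thesis using i(2) cp'(2) by simp
    next
      case (Cons q' r0')
      obtain i' where i': "cmp S u p' = Some (Var i')" "valid S (u @ [i']) (q' # r0')"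
        using Cons.prems(2) b \<open>r' = q' # r0'\<close> by auto
      have pp: "prefix p (p' @ concat r')" using pre append_prefixD by blast
      have "p = p'"
      proof -
        have pp': "prefix p' (p' @ concat r')" by simp
        from prefix_same_cases[OF pp pp'] show ?thesis
        proof
          assume "prefix p p'"
          then show ?thesis using leafy_leaf[OF lf i(2)] i'(1) by blast
        next
          assume "prefix p' p"
          then show ?thesis using leafy_leaf[OF lf i'(1)] i(2) by (metis option.distinct(1))
        qed
      qed
      then have ii: "i' = i" using i(2) i'(1) by simp
      have pr: "prefix (concat r) (concat r')" using pre \<open>p = p'\<close> by simp
      have IH: "take (length r - 1) r = take (length r - 1) r' \<and> length r - 1 < length r' \<and>
         prefix (r ! (length r - 1)) (r' ! (length r - 1))"
        using Cons.IH[of "u @ [i]" r'] i(3) i'(2) ii \<open>r = q # r0\<close> \<open>r' = q' # r0'\<close> pr by simp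
      have lr: "length r = Suc (length r - 1)" using \<open>r = q # r0\<close> by simp
      have e1: "take (length (p # r) - 1) (p # r) = p # take (length r - 1) r"
        using \<open>r = q # r0\<close> by simp
      have e2: "take (length (p # r) - 1) b = p # take (length r - 1) r'"
        using b \<open>p = p'\<close> \<open>r = q # r0\<close> by simp
      have e3: "(p # r) ! (length (p # r) - 1) = r ! (length r - 1)" using \<open>r = q # r0\<close> by simp
      have e4: "b ! (length (p # r) - 1) = r' ! (length r - 1)" using b \<open>r = q # r0\<close> by simp
      show ?thesis unfolding e1 e2 e3 e4 using IH b lr by simp
    qed
  qed
qed

lemma prefix_concat_conv:
  assumes "a \<noteq> []" "k = length a - 1" "take k a = take k b" "k < length b" "prefix (a ! k) (b ! k)"
  shows "prefix (concat a) (concat b)"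
proof -
  have ka: "k < length a" using assms(1,2) by simp
  have "concat a = concat (take k a) @ a ! k" using concat_last[OF assms(1)] assms(2) by simp
  moreover have "concat b = concat (take k b) @ b ! k @ concat (drop (Suc k) b)"
    using concat_take_nth[OF assms(4)] .
  ultimately show ?thesis using assms(3,5) by (auto simp: prefix_def)
qed

lemma valid_unique:
  assumes "goodS S" "valid S u a" "valid S u b" "concat a = concat b"
  shows "a = b"
proof -
  have A: "take (length a - 1) a = take (length a - 1) b \<and> length a - 1 < length b \<and>
         prefix (a ! (length a - 1)) (b ! (length a - 1))"
    using prefix_concat[OF assms(1-3)] assms(4) by simp
  have B: "take (length b - 1) b = take (length b - 1) a \<and> length b - 1 < length a \<and>
         prefix (b ! (length b - 1)) (a ! (length b - 1))"
    using prefix_concat[OF assms(1,3,2)] assms(4) by simp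
  have ne: "a \<noteq> []" "b \<noteq> []" using assms(2,3) valid_ne by blast+
  then have L: "length a = length b" using A B by linarith
  define k where "k = length a - 1"
  have ab: "a ! k = b ! k" using A B L unfolding k_def by (simp add: prefix_order.antisym)
  have "a = take k a @ [a ! k]" using ne unfolding k_def
    by (metis append_butlast_last_id butlast_conv_take last_conv_nth)
  moreover have "b = take k b @ [b ! k]" using ne L unfolding k_def
    by (metis append_butlast_last_id butlast_conv_take last_conv_nth)
  ultimately show ?thesis using A ab unfolding k_def by metis
qed

lemma valid_prefix_free:
  assumes "valid S u a" "valid S u b" "prefix a b"
  shows "a = b"
proof (rule ccontr)
  assume "a \<noteq> b"
  then have lt: "length a < length b" using assms(3) prefix_length_le
    by (metis le_neq_implies_less prefix_length_prefix prefix_order.antisym prefix_order.refl)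
  define k where "k = length a - 1"
  have ne: "a \<noteq> []" using assms(1) valid_ne by blast
  have k: "Suc k = length a" "Suc k < length b" using ne lt unfolding k_def by auto
  obtain z where bz: "b = a @ z" using assms(3) by (auto elim: prefixE)
  have ta: "take k a = take k b" using k bz by simp
  have na: "b ! k = a ! k" using k bz by (simp add: nth_append)
  have v: "vtx S u a k = vtx S u b k" by (rule vtx_take[OF ta])
  have "vcond S u a k" using valid_vcond[OF assms(1)] k by simp
  then have A: "issym S (vtx S u a k) \<longrightarrow> (\<exists>c. cmp S (vtx S u a k) (a ! k) = Some (Sym c))"
    using k unfolding vcond_def Let_def by simp
  have "vcond S u b k" using valid_vcond[OF assms(2)] k by simp
  then have B: "issym S (vtx S u b k) \<and> (\<exists>i. cmp S (vtx S u b k) (b ! k) = Some (Var i))"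
    using k unfolding vcond_def Let_def by simp
  show False using A B v na by auto
qed


lemma concat_nil_iff:
  assumes "goodS S" "valid S u a"
  shows "concat a = [] \<longleftrightarrow> (length a = 1 \<and> a ! 0 = [])"
proof
  assume h: "concat a = []"
  have ne: "a \<noteq> []" using valid_ne[OF assms(2)] .
  have "a ! 0 = []" using h ne by (metis concat_eq_Nil_conv nth_mem length_greater_0_conv)
  moreover have "length a = 1"
  proof (rule ccontr)
    assume "length a \<noteq> 1"
    then have "Suc 0 < length a" using ne by (cases a) auto
    then have "a ! 0 \<noteq> []" using valid_leaf_ne[OF assms, of 0] by simp
    then show False using \<open>a ! 0 = []\<close> by simp
  qed
  ultimately show "length a = 1 \<and> a ! 0 = []" by simp
next
  assume "length a = 1 \<and> a ! 0 = []"
  then have "a = [[]]" by (cases a) auto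
  then show "concat a = []" by simp
qed

lemma succ_concat:
  assumes "goodS S" "valid S u a" "valid S u b" "k = length a - 1"
  shows "concat b = concat a @ [i] \<longleftrightarrow> (take k a = take k b \<and> k < length b \<and> b ! k = a ! k @ [i] \<and>
     (length b = Suc k \<or> (length b = Suc (Suc k) \<and> b ! Suc k = [])))"
proof
  assume h: "concat b = concat a @ [i]"
  have ne: "a \<noteq> []" using valid_ne[OF assms(2)] .
  have "prefix (concat a) (concat b)" using h by simp
  then have T1: "take k a = take k b" "k < length b" "prefix (a ! k) (b ! k)"
    using prefix_concat[OF assms(1-3)] assms(4) by auto
  have cb: "concat b = concat (take k b) @ b ! k @ concat (drop (Suc k) b)" using concat_take_nth[OF T1(2)] .
  have ca: "concat a = concat (take k a) @ a ! k" using concat_last[OF ne] assms(4) by simp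
  have eq: "b ! k @ concat (drop (Suc k) b) = a ! k @ [i]" using h cb ca T1(1) by simp
  obtain z where z: "b ! k = a ! k @ z" using T1(3) by (auto elim: prefixE)
  have zD: "z @ concat (drop (Suc k) b) = [i]" using eq z by simp
  show "take k a = take k b \<and> k < length b \<and> b ! k = a ! k @ [i] \<and>
     (length b = Suc k \<or> (length b = Suc (Suc k) \<and> b ! Suc k = []))"
  proof (cases "Suc k = length b")
    case True
    then have "drop (Suc k) b = []" by simp
    then have "z = [i]" using zD by simp
    then show ?thesis using T1 z True by simp
  next
    case False
    then have lt: "Suc k < length b" using T1(2) by simp
    have ka: "Suc k = length a" using ne assms(4) by simp
    have v: "vtx S u a k = vtx S u b k" by (rule vtx_take[OF T1(1)])
    have "vcond S u a k" using valid_vcond[OF assms(2)] ka by simp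
    then have A: "issym S (vtx S u a k) \<longrightarrow> (\<exists>c. cmp S (vtx S u a k) (a ! k) = Some (Sym c))"
      using ka unfolding vcond_def Let_def by simp
    have "vcond S u b k" using valid_vcond[OF assms(3)] lt by simp
    then have B: "issym S (vtx S u b k) \<and> (\<exists>i. cmp S (vtx S u b k) (b ! k) = Some (Var i))"
      using lt unfolding vcond_def Let_def by simp
    have "b ! k \<noteq> a ! k" using A B v by auto
    then have "z \<noteq> []" using z by auto
    then have zi: "z = [i]" and D: "concat (drop (Suc k) b) = []" using zD by (cases z; auto)+
    have bS: "b ! Suc k = []" using D lt by (metis concat_eq_Nil_conv Cons_nth_drop_Suc list.set_intros(1))
    have "length b = Suc (Suc k)"
    proof (rule ccontr)
      assume "length b \<noteq> Suc (Suc k)"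
      then have "Suc (Suc k) < length b" using lt by simp
      then have "b ! Suc k \<noteq> []" using valid_leaf_ne[OF assms(1,3)] by blast
      then show False using bS by simp
    qed
    then show ?thesis using T1 z zi bS by simp
  qed
next
  assume h: "take k a = take k b \<and> k < length b \<and> b ! k = a ! k @ [i] \<and>
     (length b = Suc k \<or> (length b = Suc (Suc k) \<and> b ! Suc k = []))"
  have ne: "a \<noteq> []" using valid_ne[OF assms(2)] .
  have cb: "concat b = concat (take k b) @ b ! k @ concat (drop (Suc k) b)" using concat_take_nth h by blast
  have ca: "concat a = concat (take k a) @ a ! k" using concat_last[OF ne] assms(4) by simp
  have "concat (drop (Suc k) b) = []"
  proof (cases "length b = Suc k")
    case True then show ?thesis by simp
  next
    case False
    then have "length b = Suc (Suc k)" "b ! Suc k = []" using h by auto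
    then have "drop (Suc k) b = [[]]" by (metis Cons_nth_drop_Suc drop_all lessI order_refl)
    then show ?thesis by simp
  qed
  then show "concat b = concat a @ [i]" using cb ca h by simp
qed


type_synonym aenv = "nat \<Rightarrow> nat list list option"

definition proj :: "nat list list \<Rightarrow> aenv \<Rightarrow> penv" where
  "proj C pa y = (case pa y of None \<Rightarrow> None
     | Some a \<Rightarrow> if length C < length a \<and> take (length C) a = C then Some (a ! length C) else None)"

definition cc :: "aenv \<Rightarrow> penv" where
  "cc pa = (\<lambda>x. map_option concat (pa x))"

definition Inv :: "nat set \<Rightarrow> 'c ttree \<Rightarrow> 'c ttree \<Rightarrow> nat \<Rightarrow> aenv \<Rightarrow> aenv \<Rightarrow> bool" where
  "Inv V S T m pa pa' \<longleftrightarrow>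
    (\<forall>y. y \<notin> V \<longrightarrow> pa y = None \<and> pa' y = None) \<and>
    (\<forall>x\<in>V. pa x = None \<longleftrightarrow> pa' x = None) \<and>
    (\<forall>x a. pa x = Some a \<longrightarrow> valid S [] a) \<and> (\<forall>x a'. pa' x = Some a' \<longrightarrow> valid T [] a') \<and>
    (\<forall>x a a'. pa x = Some a \<longrightarrow> pa' x = Some a' \<longrightarrow> length a = length a' \<and>
       (\<forall>j<length a. vtx S [] a j = vtx T [] a' j \<and>
          ef V m (cmp S (vtx S [] a j)) (proj (take j a) pa) (cmp T (vtx S [] a j)) (proj (take j a') pa'))) \<and>
    (\<forall>x y a a' b b'. pa x = Some a \<longrightarrow> pa' x = Some a' \<longrightarrow> pa y = Some b \<longrightarrow> pa' y = Some b' \<longrightarrow>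
       (\<forall>j. take j a = take j b \<longleftrightarrow> take j a' = take j b'))"

lemma proj_self: "pa x = Some a \<Longrightarrow> j < length a \<Longrightarrow> proj (take j a) pa x = Some (a ! j)"
  unfolding proj_def by simp

lemma proj_other:
  assumes "pa y = Some b" "j < length b" "take j b = take j a" "j \<le> length a"
  shows "proj (take j a) pa y = Some (b ! j)"
proof -
  have l: "length (take j a) = j" using assms(4) by simp
  have "length (take j a) < length b \<and> take (length (take j a)) b = take j a"
    unfolding l using assms(2,3) by blast
  then have "proj (take j a) pa y = Some (b ! length (take j a))"
    unfolding proj_def assms(1) option.case by (rule if_P)
  then show ?thesis unfolding l .
qed

lemma InvD:
  assumes "Inv V S T m pa pa'"
  shows "\<And>y. y \<notin> V \<Longrightarrow> pa y = None" "\<And>y. y \<notin> V \<Longrightarrow> pa' y = None"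
    "\<And>x. x \<in> V \<Longrightarrow> pa x = None \<longleftrightarrow> pa' x = None"
    "\<And>x a. pa x = Some a \<Longrightarrow> valid S [] a" "\<And>x a'. pa' x = Some a' \<Longrightarrow> valid T [] a'"
    "\<And>x a a'. pa x = Some a \<Longrightarrow> pa' x = Some a' \<Longrightarrow> length a = length a'"
    "\<And>x a a' j. pa x = Some a \<Longrightarrow> pa' x = Some a' \<Longrightarrow> j < length a \<Longrightarrow> vtx S [] a j = vtx T [] a' j"
    "\<And>x a a' j. pa x = Some a \<Longrightarrow> pa' x = Some a' \<Longrightarrow> j < length a \<Longrightarrow>
          ef V m (cmp S (vtx S [] a j)) (proj (take j a) pa) (cmp T (vtx S [] a j)) (proj (take j a') pa')"
    "\<And>x y a a' b b' j. pa x = Some a \<Longrightarrow> pa' x = Some a' \<Longrightarrow> pa y = Some b \<Longrightarrow> pa' y = Some b' \<Longrightarrow>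
       take j a = take j b \<longleftrightarrow> take j a' = take j b'"
proof -
  note I = assms[unfolded Inv_def]
  note I1 = conjunct1[OF I]
  note I2 = conjunct1[OF conjunct2[OF I]]
  note I3 = conjunct1[OF conjunct2[OF conjunct2[OF I]]]
  note I4 = conjunct1[OF conjunct2[OF conjunct2[OF conjunct2[OF I]]]]
  note I5 = conjunct1[OF conjunct2[OF conjunct2[OF conjunct2[OF conjunct2[OF I]]]]]
  note I6 = conjunct2[OF conjunct2[OF conjunct2[OF conjunct2[OF conjunct2[OF I]]]]]
  show "\<And>y. y \<notin> V \<Longrightarrow> pa y = None" using I1 by blast
  show "\<And>y. y \<notin> V \<Longrightarrow> pa' y = None" using I1 by blast
  show "\<And>x. x \<in> V \<Longrightarrow> pa x = None \<longleftrightarrow> pa' x = None" using I2 by blast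
  show "\<And>x a. pa x = Some a \<Longrightarrow> valid S [] a" using I3 by blast
  show "\<And>x a'. pa' x = Some a' \<Longrightarrow> valid T [] a'" using I4 by blast
  show "\<And>x a a'. pa x = Some a \<Longrightarrow> pa' x = Some a' \<Longrightarrow> length a = length a'" using I5 by blast
  show "\<And>x a a' j. pa x = Some a \<Longrightarrow> pa' x = Some a' \<Longrightarrow> j < length a \<Longrightarrow> vtx S [] a j = vtx T [] a' j"
    using I5 by blast
  show "\<And>x a a' j. pa x = Some a \<Longrightarrow> pa' x = Some a' \<Longrightarrow> j < length a \<Longrightarrow>
          ef V m (cmp S (vtx S [] a j)) (proj (take j a) pa) (cmp T (vtx S [] a j)) (proj (take j a') pa')"
    using I5 by blast
  show "\<And>x y a a' b b' j. pa x = Some a \<Longrightarrow> pa' x = Some a' \<Longrightarrow> pa y = Some b \<Longrightarrow> pa' y = Some b' \<Longrightarrow>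
       take j a = take j b \<longleftrightarrow> take j a' = take j b'" using I6 by blast
qed

lemma atomeq_get:
  assumes "atomeq V t pe t' pe'" "x \<in> V" "y \<in> V" "pe x = Some a" "pe y = Some b" "pe' x = Some a'" "pe' y = Some b'"
  shows "t a = t' a' \<and> (a = [] \<longleftrightarrow> a' = []) \<and> (a = b \<longleftrightarrow> a' = b') \<and>
        (prefix a b \<longleftrightarrow> prefix a' b') \<and> (\<forall>i. b = a @ [i] \<longleftrightarrow> b' = a' @ [i])"
  using atomeq_at[OF assms(1-5)] assms(6,7) by auto


lemma prefix_concat_iff:
  assumes "goodS S" "valid S u a" "valid S u b" "k = length a - 1"
  shows "prefix (concat a) (concat b) \<longleftrightarrow> take k a = take k b \<and> k < length b \<and> prefix (a ! k) (b ! k)"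
  using prefix_concat[OF assms(1-3)] prefix_concat_conv[OF valid_ne[OF assms(2)] assms(4)] assms(4) by blast

lemma list_eq_take: "length a \<le> N \<Longrightarrow> length b \<le> N \<Longrightarrow> a = b \<longleftrightarrow> take N a = take N b"
  by simp

lemma inv_atomeq:
  assumes gS: "goodS S" and gT: "goodS T" and I: "Inv V S T m pa pa'"
  shows "atomeq V (flat S) (cc pa) (flat T) (cc pa')"
  unfolding atomeq_def
proof (intro ballI conjI allI impI)
  fix x assume "x \<in> V"
  then show "(cc pa x = None) = (cc pa' x = None)" using InvD(3)[OF I] unfolding cc_def by simp
next
  fix x y A A' B B'
  assume xy: "x \<in> V" "y \<in> V" and h: "cc pa x = Some A" "cc pa' x = Some A'" "cc pa y = Some B" "cc pa' y = Some B'"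
  obtain a where a: "pa x = Some a" "A = concat a" using h(1) unfolding cc_def by auto
  obtain a' where a': "pa' x = Some a'" "A' = concat a'" using h(2) unfolding cc_def by auto
  obtain b where b: "pa y = Some b" "B = concat b" using h(3) unfolding cc_def by auto
  obtain b' where b': "pa' y = Some b'" "B' = concat b'" using h(4) unfolding cc_def by auto
  have va: "valid S [] a" "valid T [] a'" "valid S [] b" "valid T [] b'"
    using InvD(4,5)[OF I] a a' b b' by blast+
  have La: "length a = length a'" using InvD(6)[OF I a(1) a'(1)] .
  have Lb: "length b = length b'" using InvD(6)[OF I b(1) b'(1)] .
  have TK: "\<And>j. take j a = take j b \<longleftrightarrow> take j a' = take j b'" using InvD(9)[OF I a(1) a'(1) b(1) b'(1)] .
  have ne: "a \<noteq> []" using valid_ne[OF va(1)] .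
  define k where "k = length a - 1"
  have "length a > 0" using ne by simp
  then have k: "k < length a" "k < length a'" "k = length a' - 1" using La unfolding k_def by auto
  have AX: "atomeq V (cmp S (vtx S [] a k)) (proj (take k a) pa) (cmp T (vtx S [] a k)) (proj (take k a') pa')"
    using ef_atomeq[OF InvD(8)[OF I a(1) a'(1) k(1)]] .
  have vk: "vtx S [] a k = vtx T [] a' k" using InvD(7)[OF I a(1) a'(1) k(1)] .
  have px: "proj (take k a) pa x = Some (a ! k)" "proj (take k a') pa' x = Some (a' ! k)"
    using proj_self[of pa x a k, OF a(1) k(1)] proj_self[of pa' x a' k, OF a'(1) k(2)] .
  have AXX: "cmp S (vtx S [] a k) (a ! k) = cmp T (vtx S [] a k) (a' ! k)"
    using atomeq_get[OF AX xy(1) xy(1) px(1) px(1) px(2) px(2)] by blast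
  show "flat S A = flat T A'"
  proof -
    have "flat S A = flab S [] a" using flat_valid[OF gS va(1)] a(2) by simp
    also have "\<dots> = cmp S (vtx S [] a k) (a ! k)" unfolding flab_def k_def using ne by (simp add: last_conv_nth)
    also have "\<dots> = cmp T (vtx T [] a' k) (a' ! k)" using AXX vk by simp
    also have "\<dots> = flab T [] a'" unfolding flab_def k(3) using valid_ne[OF va(2)] by (simp add: last_conv_nth)
    also have "\<dots> = flat T A'" using flat_valid[OF gT va(2)] a'(2) by simp
    finally show ?thesis .
  qed
  show "(A = []) = (A' = [])"
  proof -
    have z: "0 < length a" "0 < length a'" using k by auto
    have A0: "atomeq V (cmp S (vtx S [] a 0)) (proj (take 0 a) pa) (cmp T (vtx S [] a 0)) (proj (take 0 a') pa')"
      using ef_atomeq[OF InvD(8)[OF I a(1) a'(1) z(1)]] .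
    have p0: "proj (take 0 a) pa x = Some (a ! 0)" "proj (take 0 a') pa' x = Some (a' ! 0)"
      using proj_self[of pa x a 0, OF a(1) z(1)] proj_self[of pa' x a' 0, OF a'(1) z(2)] .
    have "a ! 0 = [] \<longleftrightarrow> a' ! 0 = []" using atomeq_get[OF A0 xy(1) xy(1) p0(1) p0(1) p0(2) p0(2)] by blast
    then show ?thesis using concat_nil_iff[OF gS va(1)] concat_nil_iff[OF gT va(2)] a(2) a'(2) La by simp
  qed
  show "(A = B) = (A' = B')"
  proof -
    define N where "N = max (length a) (length b)"
    have "A = B \<longleftrightarrow> a = b" using valid_unique[OF gS va(1) va(3)] a(2) b(2) by blast
    also have "\<dots> \<longleftrightarrow> take N a = take N b" by (rule list_eq_take) (simp_all add: N_def)
    also have "\<dots> \<longleftrightarrow> take N a' = take N b'" using TK by blast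
    also have "\<dots> \<longleftrightarrow> a' = b'" by (rule list_eq_take[symmetric]) (simp_all add: N_def La Lb)
    also have "\<dots> \<longleftrightarrow> A' = B'" using valid_unique[OF gT va(2) va(4)] a'(2) b'(2) by blast
    finally show ?thesis .
  qed
  have common: "take k a = take k b \<and> k < length b \<longleftrightarrow> take k a' = take k b' \<and> k < length b'"
    using TK Lb by simp
  have PY: "proj (take k a) pa y = Some (b ! k) \<and> proj (take k a') pa' y = Some (b' ! k)"
    if "take k a = take k b" "k < length b" for dummy :: unit
  proof -
    have "take k a' = take k b'" "k < length b'" using that common by blast+
    then show ?thesis using proj_other[of pa y b k a, OF b(1) that(2) that(1)[symmetric]] proj_other[of pa' y b' k a'] b'(1) k by simp
  qed
  show "prefix A B = prefix A' B'"
  proof -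
    have "prefix A B \<longleftrightarrow> take k a = take k b \<and> k < length b \<and> prefix (a ! k) (b ! k)"
      using prefix_concat_iff[OF gS va(1) va(3) k_def] a(2) b(2) by simp
    also have "\<dots> \<longleftrightarrow> take k a' = take k b' \<and> k < length b' \<and> prefix (a' ! k) (b' ! k)"
    proof (cases "take k a = take k b \<and> k < length b")
      case True
      then have py: "proj (take k a) pa y = Some (b ! k)" "proj (take k a') pa' y = Some (b' ! k)" using PY by blast+
      have "prefix (a ! k) (b ! k) \<longleftrightarrow> prefix (a' ! k) (b' ! k)"
        using atomeq_get[OF AX xy px(1) py(1) px(2) py(2)] by blast
      then show ?thesis using True common by blast
    next
      case False then show ?thesis using common by blast
    qed
    also have "\<dots> \<longleftrightarrow> prefix A' B'"
      using prefix_concat_iff[OF gT va(2) va(4) k(3)] a'(2) b'(2) by simp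
    finally show ?thesis .
  qed
  fix i
  show "(B = A @ [i]) = (B' = A' @ [i])"
  proof -
    have "B = A @ [i] \<longleftrightarrow> (take k a = take k b \<and> k < length b \<and> b ! k = a ! k @ [i] \<and>
       (length b = Suc k \<or> (length b = Suc (Suc k) \<and> b ! Suc k = [])))"
      using succ_concat[OF gS va(1) va(3) k_def] a(2) b(2) by simp
    also have "\<dots> \<longleftrightarrow> (take k a' = take k b' \<and> k < length b' \<and> b' ! k = a' ! k @ [i] \<and>
       (length b' = Suc k \<or> (length b' = Suc (Suc k) \<and> b' ! Suc k = [])))"
    proof (cases "take k a = take k b \<and> k < length b")
      case True
      then have py: "proj (take k a) pa y = Some (b ! k)" "proj (take k a') pa' y = Some (b' ! k)" using PY by blast+
      have s1: "b ! k = a ! k @ [i] \<longleftrightarrow> b' ! k = a' ! k @ [i]"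
        using atomeq_get[OF AX xy px(1) py(1) px(2) py(2)] by blast
      have s2: "(length b = Suc (Suc k) \<and> b ! Suc k = []) \<longleftrightarrow> (length b' = Suc (Suc k) \<and> b' ! Suc k = [])"
      proof (cases "length b = Suc (Suc k)")
        case True
        have z: "Suc k < length b" "Suc k < length b'" using True Lb by auto
        have AY: "atomeq V (cmp S (vtx S [] b (Suc k))) (proj (take (Suc k) b) pa) (cmp T (vtx S [] b (Suc k))) (proj (take (Suc k) b') pa')"
          using ef_atomeq[OF InvD(8)[OF I b(1) b'(1) z(1)]] .
        have p0: "proj (take (Suc k) b) pa y = Some (b ! Suc k)" "proj (take (Suc k) b') pa' y = Some (b' ! Suc k)"
          using proj_self[of pa y b "Suc k", OF b(1) z(1)] proj_self[of pa' y b' "Suc k", OF b'(1) z(2)] .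
        have "b ! Suc k = [] \<longleftrightarrow> b' ! Suc k = []" using atomeq_get[OF AY xy(2) xy(2) p0(1) p0(1) p0(2) p0(2)] by blast
        then show ?thesis using True Lb by simp
      next
        case False then show ?thesis using Lb by simp
      qed
      show ?thesis using True common s1 s2 Lb by auto
    next
      case False then show ?thesis using common by blast
    qed
    also have "\<dots> \<longleftrightarrow> B' = A' @ [i]"
      using succ_concat[OF gT va(2) va(4) k(3)] a'(2) b'(2) by simp
    finally show ?thesis .
  qed
qed


lemma InvI:
  assumes "\<And>y. y \<notin> V \<Longrightarrow> pa y = None" "\<And>y. y \<notin> V \<Longrightarrow> pa' y = None"
    "\<And>x. x \<in> V \<Longrightarrow> pa x = None \<longleftrightarrow> pa' x = None"
    "\<And>x a. pa x = Some a \<Longrightarrow> valid S [] a" "\<And>x a'. pa' x = Some a' \<Longrightarrow> valid T [] a'"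
    "\<And>x a a'. pa x = Some a \<Longrightarrow> pa' x = Some a' \<Longrightarrow> length a = length a'"
    "\<And>x a a' j. pa x = Some a \<Longrightarrow> pa' x = Some a' \<Longrightarrow> j < length a \<Longrightarrow> vtx S [] a j = vtx T [] a' j"
    "\<And>x a a' j. pa x = Some a \<Longrightarrow> pa' x = Some a' \<Longrightarrow> j < length a \<Longrightarrow>
          ef V m (cmp S (vtx S [] a j)) (proj (take j a) pa) (cmp T (vtx S [] a j)) (proj (take j a') pa')"
    "\<And>x y a a' b b' j. pa x = Some a \<Longrightarrow> pa' x = Some a' \<Longrightarrow> pa y = Some b \<Longrightarrow> pa' y = Some b' \<Longrightarrow>
       take j a = take j b \<longleftrightarrow> take j a' = take j b'"
  shows "Inv V S T m pa pa'"
  unfolding Inv_def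
proof (intro conjI)
  show "\<forall>y. y \<notin> V \<longrightarrow> pa y = None \<and> pa' y = None" using assms(1,2) by blast
  show "\<forall>x\<in>V. (pa x = None) = (pa' x = None)" using assms(3) by blast
  show "\<forall>x a. pa x = Some a \<longrightarrow> valid S [] a" using assms(4) by blast
  show "\<forall>x a'. pa' x = Some a' \<longrightarrow> valid T [] a'" using assms(5) by blast
  show "\<forall>x a a'. pa x = Some a \<longrightarrow> pa' x = Some a' \<longrightarrow> length a = length a' \<and>
       (\<forall>j<length a. vtx S [] a j = vtx T [] a' j \<and>
          ef V m (cmp S (vtx S [] a j)) (proj (take j a) pa) (cmp T (vtx S [] a j)) (proj (take j a') pa'))"
    using assms(6,7,8) by blast
  show "\<forall>x y a a' b b'. pa x = Some a \<longrightarrow> pa' x = Some a' \<longrightarrow> pa y = Some b \<longrightarrow> pa' y = Some b' \<longrightarrow>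
       (\<forall>j. take j a = take j b \<longleftrightarrow> take j a' = take j b')" using assms(9) by blast
qed

lemma proj_upd:
  "proj C (pa(x := Some a)) = (proj C pa)(x := (if length C < length a \<and> take (length C) a = C then Some (a ! length C) else None))"
  unfolding proj_def by (rule ext) simp

lemma proj_none: "proj C (pa(x := None)) = (proj C pa)(x := None)"
  unfolding proj_def by (rule ext) simp

lemma proj_none_at: "pa x = None \<Longrightarrow> proj C pa x = None"
  unfolding proj_def by simp

lemma inv_restrict:
  assumes I: "Inv V S T m pa pa'"
  shows "Inv V S T m (pa(x:=None)) (pa'(x:=None))"
proof (rule InvI)
  note D = InvD[OF I]
  show "\<And>y. y \<notin> V \<Longrightarrow> (pa(x := None)) y = None" using D(1) by simp
  show "\<And>y. y \<notin> V \<Longrightarrow> (pa'(x := None)) y = None" using D(2) by simp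
  show "\<And>z. z \<in> V \<Longrightarrow> ((pa(x := None)) z = None) = ((pa'(x := None)) z = None)" using D(3) by simp
  show "\<And>z a. (pa(x := None)) z = Some a \<Longrightarrow> valid S [] a" using D(4) by (simp split: if_splits)
  show "\<And>z a. (pa'(x := None)) z = Some a \<Longrightarrow> valid T [] a" using D(5) by (simp split: if_splits)
  show "\<And>z a a'. (pa(x := None)) z = Some a \<Longrightarrow> (pa'(x := None)) z = Some a' \<Longrightarrow> length a = length a'"
    using D(6) by (simp split: if_splits)
  show "\<And>z a a' j. (pa(x := None)) z = Some a \<Longrightarrow> (pa'(x := None)) z = Some a' \<Longrightarrow> j < length a \<Longrightarrow>
     vtx S [] a j = vtx T [] a' j" using D(7) by (simp split: if_splits)
  show "\<And>z a a' j. (pa(x := None)) z = Some a \<Longrightarrow> (pa'(x := None)) z = Some a' \<Longrightarrow> j < length a \<Longrightarrow>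
     ef V m (cmp S (vtx S [] a j)) (proj (take j a) (pa(x := None))) (cmp T (vtx S [] a j)) (proj (take j a') (pa'(x := None)))"
  proof -
    fix z a a' j assume h: "(pa(x := None)) z = Some a" "(pa'(x := None)) z = Some a'" "j < length a"
    then have h2: "pa z = Some a" "pa' z = Some a'" by (simp_all split: if_splits)
    show "ef V m (cmp S (vtx S [] a j)) (proj (take j a) (pa(x := None))) (cmp T (vtx S [] a j)) (proj (take j a') (pa'(x := None)))"
      unfolding proj_none using ef_restrict[OF D(8)[OF h2 h(3)]] .
  qed
  show "\<And>z y a a' b b' j. (pa(x := None)) z = Some a \<Longrightarrow> (pa'(x := None)) z = Some a' \<Longrightarrow>
       (pa(x := None)) y = Some b \<Longrightarrow> (pa'(x := None)) y = Some b' \<Longrightarrow> (take j a = take j b) = (take j a' = take j b')"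
    using D(9) by (simp split: if_splits)
qed

lemma inv_mono:
  assumes I: "Inv V S T (Suc m) pa pa'"
  shows "Inv V S T m pa pa'"
proof (rule InvI)
  note D = InvD[OF I]
  show "\<And>y. y \<notin> V \<Longrightarrow> pa y = None" using D(1) .
  show "\<And>y. y \<notin> V \<Longrightarrow> pa' y = None" using D(2) .
  show "\<And>x. x \<in> V \<Longrightarrow> (pa x = None) = (pa' x = None)" using D(3) .
  show "\<And>x a. pa x = Some a \<Longrightarrow> valid S [] a" using D(4) .
  show "\<And>x a'. pa' x = Some a' \<Longrightarrow> valid T [] a'" using D(5) .
  show "\<And>x a a'. pa x = Some a \<Longrightarrow> pa' x = Some a' \<Longrightarrow> length a = length a'" using D(6) .
  show "\<And>x a a' j. pa x = Some a \<Longrightarrow> pa' x = Some a' \<Longrightarrow> j < length a \<Longrightarrow> vtx S [] a j = vtx T [] a' j" using D(7) .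
  show "\<And>x a a' j. pa x = Some a \<Longrightarrow> pa' x = Some a' \<Longrightarrow> j < length a \<Longrightarrow>
          ef V m (cmp S (vtx S [] a j)) (proj (take j a) pa) (cmp T (vtx S [] a j)) (proj (take j a') pa')"
    using D(8) ef_mono by blast
  show "\<And>x y a a' b b' j. pa x = Some a \<Longrightarrow> pa' x = Some a' \<Longrightarrow> pa y = Some b \<Longrightarrow> pa' y = Some b' \<Longrightarrow>
       take j a = take j b \<longleftrightarrow> take j a' = take j b'" using D(9) .
qed

lemma inv_swap:
  assumes I: "Inv V S T m pa pa'"
  shows "Inv V T S m pa' pa"
proof (rule InvI)
  note D = InvD[OF I]
  show "\<And>y. y \<notin> V \<Longrightarrow> pa' y = None" using D(2) .
  show "\<And>y. y \<notin> V \<Longrightarrow> pa y = None" using D(1) .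
  show "\<And>x. x \<in> V \<Longrightarrow> (pa' x = None) = (pa x = None)" using D(3) by blast
  show "\<And>x a. pa' x = Some a \<Longrightarrow> valid T [] a" using D(5) .
  show "\<And>x a'. pa x = Some a' \<Longrightarrow> valid S [] a'" using D(4) .
  show "\<And>x a a'. pa' x = Some a \<Longrightarrow> pa x = Some a' \<Longrightarrow> length a = length a'" using D(6) by metis
  show "\<And>x a a' j. pa' x = Some a \<Longrightarrow> pa x = Some a' \<Longrightarrow> j < length a \<Longrightarrow> vtx T [] a j = vtx S [] a' j"
    using D(6,7) by metis
  show "\<And>x a a' j. pa' x = Some a \<Longrightarrow> pa x = Some a' \<Longrightarrow> j < length a \<Longrightarrow>
          ef V m (cmp T (vtx T [] a j)) (proj (take j a) pa') (cmp S (vtx T [] a j)) (proj (take j a') pa)"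
  proof -
    fix x a a' j assume h: "pa' x = Some a" "pa x = Some a'" "j < length a"
    have j: "j < length a'" using h D(6)[OF h(2,1)] by simp
    have v: "vtx T [] a j = vtx S [] a' j" using D(7)[OF h(2,1) j] by simp
    show "ef V m (cmp T (vtx T [] a j)) (proj (take j a) pa') (cmp S (vtx T [] a j)) (proj (take j a') pa)"
      unfolding v using ef_sym[OF D(8)[OF h(2,1) j]] .
  qed
  show "\<And>x y a a' b b' j. pa' x = Some a \<Longrightarrow> pa x = Some a' \<Longrightarrow> pa' y = Some b \<Longrightarrow> pa y = Some b' \<Longrightarrow>
       take j a = take j b \<longleftrightarrow> take j a' = take j b'" using D(9) by metis
qed

lemma take_ge_valid:
  assumes "valid S u a" "valid S u c" "length a \<le> j"
  shows "take j a = take j c \<longleftrightarrow> take (length a) a = take (length a) c"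
proof
  assume "take j a = take j c"
  then have "take (length a) (take j a) = take (length a) (take j c)" by simp
  then show "take (length a) a = take (length a) c" using assms(3) by (simp add: min_def)
next
  assume "take (length a) a = take (length a) c"
  then have "a = take (length a) c" by simp
  then have "prefix a c" by (metis take_is_prefix)
  then have "a = c" using valid_prefix_free[OF assms(1,2)] by blast
  then show "take j a = take j c" by simp
qed

lemma flab_valid_ne:
  assumes "valid S u a" shows "flab S u a \<noteq> None"
proof -
  have ne: "a \<noteq> []" using valid_ne[OF assms] .
  have "vcond S u a (length a - 1)" using valid_vcond[OF assms] ne by simp
  then have "cmp S (vtx S u a (length a - 1)) (a ! (length a - 1)) \<noteq> None"
    using ne unfolding vcond_def Let_def by simp
  then show ?thesis unfolding flab_def using ne by (simp add: last_conv_nth)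
qed

lemma cc_upd: "cc (pa(x := Some a)) = (cc pa)(x := Some (concat a))"
  unfolding cc_def by (rule ext) simp


locale comp2 =
  fixes V :: "nat set" and r :: nat and S T :: "'c ttree"
  assumes gS: "goodS S" and gT: "goodS T"
    and h1: "\<And>u. issym S u \<longleftrightarrow> issym T u"
    and h3: "\<And>u. ef V r (cmp S u) (\<lambda>_. None) (cmp T u) (\<lambda>_. None)"
begin

lemma swap: "comp2 V r T S"
  by unfold_locales (use gS gT h1 ef_sym[OF h3] in auto)

definition Part :: "nat \<Rightarrow> nat \<Rightarrow> aenv \<Rightarrow> aenv \<Rightarrow> nat list list \<Rightarrow> nat list list \<Rightarrow> bool" where
  "Part m x pa0 pa0' a b \<longleftrightarrow>
    (\<forall>i\<le>length b. vtx S [] a i = vtx T [] b i) \<and>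
    (\<forall>y c c'. pa0 y = Some c \<longrightarrow> pa0' y = Some c' \<longrightarrow> (\<forall>i\<le>length b. take i a = take i c \<longleftrightarrow> take i b = take i c')) \<and>
    (\<forall>i<length b. ef V m (cmp S (vtx S [] a i)) ((proj (take i a) pa0)(x:=Some (a!i)))
                          (cmp T (vtx S [] a i)) ((proj (take i b) pa0')(x:=Some (b!i))))"

lemma PartD:
  assumes "Part m x pa0 pa0' a b"
  shows "\<And>i. i \<le> length b \<Longrightarrow> vtx S [] a i = vtx T [] b i"
    "\<And>y c c' i. pa0 y = Some c \<Longrightarrow> pa0' y = Some c' \<Longrightarrow> i \<le> length b \<Longrightarrow> take i a = take i c \<longleftrightarrow> take i b = take i c'"
    "\<And>i. i < length b \<Longrightarrow> ef V m (cmp S (vtx S [] a i)) ((proj (take i a) pa0)(x:=Some (a!i)))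
                          (cmp T (vtx S [] a i)) ((proj (take i b) pa0')(x:=Some (b!i)))"
  using assms unfolding Part_def by blast+

lemma construct:
  assumes I0: "Inv V S T (Suc m) pa0 pa0'" and x: "x \<in> V" "pa0 x = None" and mr: "Suc m \<le> r"
    and va: "valid S [] a"
  shows "j \<le> length a \<Longrightarrow> \<exists>b. length b = j \<and> Part m x pa0 pa0' a b"
proof (induction j)
  case 0 show ?case by (intro exI[of _ "[]"]) (simp add: Part_def)
next
  case (Suc j)
  then obtain b where b: "length b = j" "Part m x pa0 pa0' a b" by auto
  have jl: "j < length a" using Suc.prems by simp
  note D = InvD[OF I0]
  note P = PartD[OF b(2), unfolded b(1)]
  define u where "u = vtx S [] a j"
  have uT: "vtx T [] b j = u" using P(1)[of j] u_def by simp
  have tb: "take j b = b" using b(1) by simp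
  have K: "ef V (Suc m) (cmp S u) (proj (take j a) pa0) (cmp T u) (proj b pa0')"
  proof (cases "\<exists>y c. pa0 y = Some c \<and> j < length c \<and> take j c = take j a")
    case True
    then obtain y c where yc: "pa0 y = Some c" "j < length c" "take j c = take j a" by blast
    have yV: "y \<in> V" using D(1) yc(1) by (cases "y \<in> V") auto
    obtain c' where c': "pa0' y = Some c'" using D(3)[OF yV] yc(1) by auto
    have tc': "take j c' = b" using P(2)[OF yc(1) c' le_refl] yc(3) tb by simp
    have E: "ef V (Suc m) (cmp S (vtx S [] c j)) (proj (take j c) pa0) (cmp T (vtx S [] c j)) (proj (take j c') pa0')"
      using D(8)[OF yc(1) c' yc(2)] .
    have "vtx S [] c j = u" unfolding u_def by (rule vtx_take) (use yc(3) in simp)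
    then show ?thesis using E yc(3) tc' by simp
  next
    case False
    have n1: "proj (take j a) pa0 = (\<lambda>_. None)"
    proof (rule ext)
      fix y show "proj (take j a) pa0 y = None"
      proof (cases "pa0 y")
        case None then show ?thesis by (simp add: proj_def)
      next
        case (Some c)
        then have "\<not> (j < length c \<and> take j c = take j a)" using False by blast
        moreover have "length (take j a) = j" using jl by simp
        ultimately show ?thesis using Some unfolding proj_def by simp
      qed
    qed
    have n2: "proj b pa0' = (\<lambda>_. None)"
    proof (rule ext)
      fix y show "proj b pa0' y = None"
      proof (cases "pa0' y")
        case None then show ?thesis by (simp add: proj_def)
      next
        case (Some c')
        have yV: "y \<in> V" using D(2) Some by (cases "y \<in> V") auto
        obtain c where c: "pa0 y = Some c" using D(3)[OF yV] Some by auto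
        have lc: "length c = length c'" using D(6)[OF c Some] .
        have "\<not> (j < length c' \<and> take j c' = b)"
        proof
          assume h: "j < length c' \<and> take j c' = b"
          then have "take j a = take j c" using P(2)[OF c Some le_refl] tb by simp
          then have "pa0 y = Some c \<and> j < length c \<and> take j c = take j a" using c h lc by simp
          then show False using False by blast
        qed
        then show ?thesis using Some b(1) unfolding proj_def by simp
      qed
    qed
    have "ef V r (cmp S u) (\<lambda>_. None) (cmp T u) (\<lambda>_. None)" using h3 .
    then have "ef V (Suc m) (cmp S u) (\<lambda>_. None) (cmp T u) (\<lambda>_. None)" using ef_mono_le mr by blast
    then show ?thesis using n1 n2 by simp
  qed
  have adom: "cmp S u (a ! j) \<noteq> None"
  proof -
    have "vcond S [] a j" using valid_vcond[OF va jl] .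
    then show ?thesis unfolding vcond_def Let_def u_def using jl by (cases "Suc j < length a") auto
  qed
  obtain p' where p': "cmp T u p' \<noteq> None"
    "ef V m (cmp S u) ((proj (take j a) pa0)(x:=Some (a!j))) (cmp T u) ((proj b pa0')(x:=Some p'))"
    using efD1[OF K x(1) adom] by blast
  define b' where "b' = b @ [p']"
  have AXN: "atomeq V (cmp S u) ((proj (take j a) pa0)(x:=Some (a!j))) (cmp T u) ((proj b pa0')(x:=Some p'))"
    using ef_atomeq[OF p'(2)] .
  have lab: "cmp S u (a!j) = cmp T u p'"
    using atomeq_get[OF AXN x(1) x(1), of "a!j" "a!j" p' p'] by simp
  show ?case
  proof (intro exI[of _ b'] conjI)
    show "length b' = Suc j" unfolding b'_def using b(1) by simp
    show "Part m x pa0 pa0' a b'" unfolding Part_def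
    proof (intro conjI allI impI)
      fix i assume i: "i \<le> length b'"
      show "vtx S [] a i = vtx T [] b' i"
      proof (cases "i \<le> j")
        case True
        have "vtx T [] b' i = vtx T [] b i" by (rule vtx_take) (use True b(1) in \<open>simp add: b'_def\<close>)
        then show ?thesis using P(1)[OF True] by simp
      next
        case False
        then have i': "i = Suc j" using i b(1) unfolding b'_def by simp
        have "vtx S [] a (Suc j) = u @ [vix (cmp S u (a ! j))]" using vtx_Suc[OF jl] u_def by simp
        moreover have "vtx T [] b' (Suc j) = u @ [vix (cmp T u p')]"
          using vtx_snoc[of T "[]" b p'] b(1) uT unfolding b'_def by simp
        ultimately show ?thesis using i' lab by simp
      qed
    next
      fix y c c' i assume yc: "pa0 y = Some c" "pa0' y = Some c'" and i: "i \<le> length b'"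
      show "take i a = take i c \<longleftrightarrow> take i b' = take i c'"
      proof (cases "i \<le> j")
        case True
        have "take i b' = take i b" using True b(1) unfolding b'_def by simp
        then show ?thesis using P(2)[OF yc True] by simp
      next
        case False
        then have i': "i = Suc j" using i b(1) unfolding b'_def by simp
        have yV: "y \<in> V" using D(1) yc(1) by (cases "y \<in> V") auto
        have yx: "y \<noteq> x" using yc(1) x(2) by auto
        have lc: "length c = length c'" using D(6)[OF yc] .
        show ?thesis
        proof (cases "j < length c")
          case False
          then have "take (Suc j) c = c" "take (Suc j) c' = c'" using lc by simp_all
          moreover have "length (take (Suc j) a) = Suc j" using jl by simp
          moreover have "length (take (Suc j) b') = Suc j" using b(1) unfolding b'_def by simp
          ultimately show ?thesis using i' False lc by auto
        next
          case True
          have ta: "take (Suc j) a = take j a @ [a ! j]" using jl by (simp add: take_Suc_conv_app_nth)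
          have tb': "take (Suc j) b' = b @ [p']" using b(1) unfolding b'_def by simp
          have tc: "take (Suc j) c = take j c @ [c ! j]" using True by (simp add: take_Suc_conv_app_nth)
          have tc': "take (Suc j) c' = take j c' @ [c' ! j]" using True lc by (simp add: take_Suc_conv_app_nth)
          have e1: "take j a = take j c \<longleftrightarrow> b = take j c'" using P(2)[OF yc le_refl] tb by simp
          have e2: "a ! j = c ! j \<longleftrightarrow> p' = c' ! j" if h: "take j a = take j c"
          proof -
            have py: "proj (take j a) pa0 y = Some (c ! j)"
              using proj_other[of pa0 y c j a, OF yc(1) True h[symmetric]] jl by simp
            have hb: "take j c' = b" using e1 h by simp
            have py': "proj b pa0' y = Some (c' ! j)"
              using proj_other[of pa0' y c' j b, OF yc(2)] True lc hb b(1) by simp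
            have f1: "((proj (take j a) pa0)(x:=Some (a!j))) y = Some (c ! j)" using py yx by simp
            have f2: "((proj b pa0')(x:=Some p')) y = Some (c' ! j)" using py' yx by simp
            show ?thesis using atomeq_get[OF AXN x(1) yV _ f1 _ f2] by simp
          qed
          have l1: "length (take j a) = length (take j c)" using jl True by simp
          have l2: "length b = length (take j c')" using b(1) True lc by simp
          show ?thesis unfolding i' ta tb' tc tc' using e1 e2 l1 l2 by auto
        qed
      qed
    next
      fix i assume i: "i < length b'"
      show "ef V m (cmp S (vtx S [] a i)) ((proj (take i a) pa0)(x:=Some (a!i)))
                   (cmp T (vtx S [] a i)) ((proj (take i b') pa0')(x:=Some (b'!i)))"
      proof (cases "i < j")
        case True
        have "take i b' = take i b" "b' ! i = b ! i" using True b(1) unfolding b'_def by (simp_all add: nth_append)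
        then show ?thesis using P(3)[OF True] by simp
      next
        case False
        then have i': "i = j" using i b(1) unfolding b'_def by simp
        have "take j b' = b" "b' ! j = p'" using b(1) unfolding b'_def by (auto simp: nth_append)
        then show ?thesis using p'(2) i' u_def by simp
      qed
    qed
  qed
qed

end


context comp2 begin

lemma step:
  assumes I: "Inv V S T (Suc m) pa pa'" and x: "x \<in> V" and mr: "Suc m \<le> r" and va: "valid S [] a"
  shows "\<exists>b. valid T [] b \<and> Inv V S T m (pa(x:=Some a)) (pa'(x:=Some b))"
proof -
  define pa0 where "pa0 = pa(x:=None)"
  define pa0' where "pa0' = pa'(x:=None)"
  have I0: "Inv V S T (Suc m) pa0 pa0'" unfolding pa0_def pa0'_def by (rule inv_restrict[OF I])
  have x0: "pa0 x = None" "pa0' x = None" unfolding pa0_def pa0'_def by simp_all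
  obtain b where b: "length b = length a" "Part m x pa0 pa0' a b"
    using construct[OF I0 x x0(1) mr va le_refl] by blast
  note P = PartD[OF b(2), unfolded b(1)]
  note D = InvD[OF I0]
  have ne: "a \<noteq> []" using valid_ne[OF va] .
  have lab: "cmp S (vtx S [] a j) (a ! j) = cmp T (vtx S [] a j) (b ! j)" if j: "j < length a" for j
  proof -
    have A: "atomeq V (cmp S (vtx S [] a j)) ((proj (take j a) pa0)(x:=Some (a!j)))
                          (cmp T (vtx S [] a j)) ((proj (take j b) pa0')(x:=Some (b!j)))"
      using ef_atomeq[OF P(3)[OF j]] .
    show ?thesis using atomeq_get[OF A x x, of "a!j" "a!j" "b!j" "b!j"] by simp
  qed
  have vb: "valid T [] b"
    unfolding valid_iff
  proof (intro conjI allI impI)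
    show "b \<noteq> []" using ne b(1) by auto
  next
    fix j assume "j < length b"
    then have j: "j < length a" using b(1) by simp
    have v: "vtx T [] b j = vtx S [] a j" using P(1)[of j] j by simp
    have "vcond S [] a j" using valid_vcond[OF va j] .
    then show "vcond T [] b j" unfolding vcond_def Let_def v b(1) using lab[OF j] h1 by simp
  qed
  have upd: "pa(x:=Some a) = pa0(x:=Some a)" "pa'(x:=Some b) = pa0'(x:=Some b)"
    unfolding pa0_def pa0'_def by simp_all
  have projx: "proj (take j a) (pa0(x:=Some a)) = (proj (take j a) pa0)(x:=Some (a!j))"
    "proj (take j b) (pa0'(x:=Some b)) = (proj (take j b) pa0')(x:=Some (b!j))" if "j < length a" for j
    using that b(1) by (simp_all add: proj_upd)
  have projo: "proj (take j c) (pa0(x:=Some a)) =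
      (if j < length a \<and> take j a = take j c then (proj (take j a) pa0)(x:=Some (a!j)) else proj (take j c) pa0)"
    if "j < length c" for j c
  proof -
    have l: "length (take j c) = j" using that by simp
    show ?thesis
    proof (cases "j < length a \<and> take j a = take j c")
      case True
      then show ?thesis unfolding proj_upd l by simp
    next
      case False
      have "proj (take j c) pa0 x = None" using proj_none_at[of pa0 x, OF x0(1)] .
      then show ?thesis unfolding proj_upd l using False by auto
    qed
  qed
  have projo': "proj (take j c') (pa0'(x:=Some b)) =
      (if j < length b \<and> take j b = take j c' then (proj (take j b) pa0')(x:=Some (b!j)) else proj (take j c') pa0')"
    if "j < length c'" for j c'
  proof -
    have l: "length (take j c') = j" using that by simp
    show ?thesis
    proof (cases "j < length b \<and> take j b = take j c'")
      case True
      then show ?thesis unfolding proj_upd l by simp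
    next
      case False
      have "proj (take j c') pa0' x = None" using proj_none_at[of pa0' x, OF x0(2)] .
      then show ?thesis unfolding proj_upd l using False by auto
    qed
  qed
  have TKx: "take j a = take j c \<longleftrightarrow> take j b = take j c'" if yc: "pa0 y = Some c" "pa0' y = Some c'" for y c c' j
  proof (cases "j \<le> length a")
    case True then show ?thesis by (rule P(2)[OF yc])
  next
    case False
    have vc: "valid S [] c" "valid T [] c'" using D(4)[of y c] D(5)[of y c'] yc by simp_all
    have "take j a = take j c \<longleftrightarrow> take (length a) a = take (length a) c"
      by (rule take_ge_valid[OF va vc(1)]) (use False in simp)
    also have "\<dots> \<longleftrightarrow> take (length a) b = take (length a) c'" by (rule P(2)[OF yc]) simp
    also have "\<dots> \<longleftrightarrow> take j b = take j c'"
      unfolding b(1)[symmetric] by (rule take_ge_valid[OF vb vc(2), symmetric]) (use False b(1) in simp)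
    finally show ?thesis .
  qed
  have "Inv V S T m (pa0(x:=Some a)) (pa0'(x:=Some b))"
  proof (rule InvI)
    show "\<And>y. y \<notin> V \<Longrightarrow> (pa0(x := Some a)) y = None" using D(1) x by auto
    show "\<And>y. y \<notin> V \<Longrightarrow> (pa0'(x := Some b)) y = None" using D(2) x by auto
    show "\<And>z. z \<in> V \<Longrightarrow> ((pa0(x := Some a)) z = None) = ((pa0'(x := Some b)) z = None)" using D(3) by simp
    show "\<And>z c. (pa0(x := Some a)) z = Some c \<Longrightarrow> valid S [] c" using D(4) va by (simp split: if_splits)
    show "\<And>z c. (pa0'(x := Some b)) z = Some c \<Longrightarrow> valid T [] c" using D(5) vb by (simp split: if_splits)
    show "\<And>z c c'. (pa0(x := Some a)) z = Some c \<Longrightarrow> (pa0'(x := Some b)) z = Some c' \<Longrightarrow> length c = length c'"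
      using D(6) b(1) by (simp split: if_splits)
    show "\<And>z c c' j. (pa0(x := Some a)) z = Some c \<Longrightarrow> (pa0'(x := Some b)) z = Some c' \<Longrightarrow> j < length c \<Longrightarrow>
       vtx S [] c j = vtx T [] c' j"
      using D(7) P(1) b(1) by (simp split: if_splits)
    show "\<And>z c c' j. (pa0(x := Some a)) z = Some c \<Longrightarrow> (pa0'(x := Some b)) z = Some c' \<Longrightarrow> j < length c \<Longrightarrow>
       ef V m (cmp S (vtx S [] c j)) (proj (take j c) (pa0(x := Some a))) (cmp T (vtx S [] c j)) (proj (take j c') (pa0'(x := Some b)))"
    proof -
      fix z c c' j assume h: "(pa0(x := Some a)) z = Some c" "(pa0'(x := Some b)) z = Some c'" "j < length c"
      show "ef V m (cmp S (vtx S [] c j)) (proj (take j c) (pa0(x := Some a))) (cmp T (vtx S [] c j)) (proj (take j c') (pa0'(x := Some b)))"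
      proof (cases "z = x")
        case True
        then have cc: "c = a" "c' = b" using h by simp_all
        show ?thesis unfolding cc projx[OF h(3)[unfolded cc]] using P(3) h(3) cc by simp
      next
        case False
        then have yc: "pa0 z = Some c" "pa0' z = Some c'" using h by simp_all
        have lc: "length c = length c'" using D(6)[OF yc] .
        have j': "j < length c'" using h(3) lc by simp
        show ?thesis
        proof (cases "j < length a \<and> take j a = take j c")
          case True
          have tb: "take j b = take j c'" using TKx[OF yc] True by simp
          have jb: "j < length b" using True b(1) by simp
          have vv: "vtx S [] c j = vtx S [] a j" by (rule vtx_take) (use True in simp)
          have "ef V m (cmp S (vtx S [] a j)) ((proj (take j a) pa0)(x:=Some (a!j)))
                          (cmp T (vtx S [] a j)) ((proj (take j b) pa0')(x:=Some (b!j)))"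
            using P(3)[OF conjunct1[OF True]] .
          then show ?thesis unfolding projo[OF h(3)] projo'[OF j'] vv using True tb jb by simp
        next
          case False
          have F': "\<not> (j < length b \<and> take j b = take j c')"
          proof
            assume "j < length b \<and> take j b = take j c'"
            then have "j < length a \<and> take j a = take j c" using TKx[OF yc] b(1) by simp
            then show False using False by blast
          qed
          have "ef V m (cmp S (vtx S [] c j)) (proj (take j c) pa0) (cmp T (vtx S [] c j)) (proj (take j c') pa0')"
            using ef_mono[OF D(8)[OF yc h(3)]] .
          then show ?thesis unfolding projo[OF h(3)] projo'[OF j'] if_not_P[OF False] if_not_P[OF F'] .
        qed
      qed
    qed
    show "\<And>z y c c' d d' j. (pa0(x := Some a)) z = Some c \<Longrightarrow> (pa0'(x := Some b)) z = Some c' \<Longrightarrow>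
       (pa0(x := Some a)) y = Some d \<Longrightarrow> (pa0'(x := Some b)) y = Some d' \<Longrightarrow> (take j c = take j d) = (take j c' = take j d')"
    proof -
      fix z y c c' d d' j
      assume h: "(pa0(x := Some a)) z = Some c" "(pa0'(x := Some b)) z = Some c'"
        "(pa0(x := Some a)) y = Some d" "(pa0'(x := Some b)) y = Some d'"
      show "(take j c = take j d) = (take j c' = take j d')"
      proof (cases "z = x")
        case True
        then have cc: "c = a" "c' = b" using h by simp_all
        show ?thesis
        proof (cases "y = x")
          case True then show ?thesis using h cc by simp
        next
          case False
          then have "pa0 y = Some d" "pa0' y = Some d'" using h by simp_all
          then show ?thesis using TKx cc by blast
        qed
      next
        case False
        then have zc: "pa0 z = Some c" "pa0' z = Some c'" using h by simp_all
        show ?thesis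
        proof (cases "y = x")
          case True
          then have dd: "d = a" "d' = b" using h by simp_all
          show ?thesis using TKx[OF zc, of j] dd by metis
        next
          case False
          then have "pa0 y = Some d" "pa0' y = Some d'" using h by simp_all
          then show ?thesis using D(9) zc by blast
        qed
      qed
    qed
  qed
  then show ?thesis using vb upd by auto
qed

end

lemma comp2_main:
  assumes "comp2 V r S T" "Inv V S T m pa pa'" "m \<le> r"
  shows "ef V m (flat S) (cc pa) (flat T) (cc pa')"
  using assms
proof (induction m arbitrary: S T pa pa')
  case 0
  then interpret comp2 V r S T by simp
  show ?case using inv_atomeq[OF gS gT 0(2)] by simp
next
  case (Suc m)
  interpret comp2 V r S T by fact
  show ?case
  proof (rule efI)
    show "atomeq V (flat S) (cc pa) (flat T) (cc pa')" using inv_atomeq[OF gS gT Suc.prems(2)] .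
  next
    fix x w assume x: "x \<in> V" and w: "flat S w \<noteq> None"
    obtain a where a: "valid S [] a" "concat a = w" using flat_some_valid[OF w] by blast
    obtain b where b: "valid T [] b" "Inv V S T m (pa(x:=Some a)) (pa'(x:=Some b))"
      using step[OF Suc.prems(2) x Suc.prems(3) a(1)] by blast
    have "ef V m (flat S) (cc (pa(x:=Some a))) (flat T) (cc (pa'(x:=Some b)))"
      by (rule Suc.IH[OF Suc.prems(1) b(2)]) (use Suc.prems(3) in simp)
    moreover have "flat T (concat b) \<noteq> None" using flat_valid[OF gT b(1)] flab_valid_ne[OF b(1)] by simp
    ultimately show "\<exists>w'. flat T w' \<noteq> None \<and> ef V m (flat S) ((cc pa)(x := Some w)) (flat T) ((cc pa')(x := Some w'))"
      using a(2) by (auto simp: cc_upd)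
  next
    fix x w' assume x: "x \<in> V" and w': "flat T w' \<noteq> None"
    obtain b where b: "valid T [] b" "concat b = w'" using flat_some_valid[OF w'] by blast
    obtain a where a: "valid S [] a" "Inv V T S m (pa'(x:=Some b)) (pa(x:=Some a))"
      using comp2.step[OF swap inv_swap[OF Suc.prems(2)] x Suc.prems(3) b(1)] by blast
    have "ef V m (flat S) (cc (pa(x:=Some a))) (flat T) (cc (pa'(x:=Some b)))"
      by (rule Suc.IH[OF Suc.prems(1) inv_swap[OF a(2)]]) (use Suc.prems(3) in simp)
    moreover have "flat S (concat a) \<noteq> None" using flat_valid[OF gS a(1)] flab_valid_ne[OF a(1)] by simp
    ultimately show "\<exists>w. flat S w \<noteq> None \<and> ef V m (flat S) ((cc pa)(x := Some w)) (flat T) ((cc pa')(x := Some w'))"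
      using b(2) by (auto simp: cc_upd)
  qed
qed

lemma Inv_init: "Inv V S T m (\<lambda>_. None) (\<lambda>_. None)"
  unfolding Inv_def by simp

lemma comp2_flat:
  assumes "comp2 V r S T"
  shows "ef V r (flat S) (\<lambda>_. None) (flat T) (\<lambda>_. None)"
proof -
  have "ef V r (flat S) (cc (\<lambda>_. None)) (flat T) (cc (\<lambda>_. None))"
    by (rule comp2_main[OF assms Inv_init]) simp
  then show ?thesis unfolding cc_def by simp
qed


lemma finite_bv: "finite (bv \<phi>)"
  by (induction \<phi>) auto

lemma models_holds: "models t \<phi> \<longleftrightarrow> holds t (\<lambda>_. []) \<phi>"
  unfolding models_def by simp

lemma agree_none: "agree e (\<lambda>_. None)"
  unfolding agree_def by simp

context hint begin

lemma wfcfg_none: "wf_tree lin Sig n t \<Longrightarrow> wfcfg {} t (\<lambda>_. None)"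
  unfolding wfcfg_def by simp

lemma hint_sent:
  assumes "0 < m"
  obtains H where "finite H" "\<And>\<chi>. \<chi> \<in> H \<Longrightarrow> good m {} \<chi>"
    "\<And>t. wf_tree lin Sig n t \<Longrightarrow> \<exists>\<chi>\<in>H. models t \<chi>"
    "\<And>\<chi> t t'. \<chi> \<in> H \<Longrightarrow> wf_tree lin Sig n t \<Longrightarrow> wf_tree lin Sig n t' \<Longrightarrow> models t \<chi> \<Longrightarrow> models t' \<chi> \<Longrightarrow>
        ef V m t (\<lambda>_. None) t' (\<lambda>_. None)"
proof -
  obtain H where H: "finite H" "\<forall>\<chi>\<in>H. good m {} \<chi>" "cover {} H" "sep m {} H"
    using hintikka[of "{}" m] assms by auto
  show ?thesis
  proof (rule that[OF H(1)])
    show "\<And>\<chi>. \<chi> \<in> H \<Longrightarrow> good m {} \<chi>" using H(2) by blast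
    show "\<And>t. wf_tree lin Sig n t \<Longrightarrow> \<exists>\<chi>\<in>H. models t \<chi>"
      using H(3) wfcfg_none agree_none unfolding cover_def models_holds by blast
    show "\<And>\<chi> t t'. \<chi> \<in> H \<Longrightarrow> wf_tree lin Sig n t \<Longrightarrow> wf_tree lin Sig n t' \<Longrightarrow> models t \<chi> \<Longrightarrow> models t' \<chi> \<Longrightarrow>
        ef V m t (\<lambda>_. None) t' (\<lambda>_. None)"
      using H(4) wfcfg_none agree_none unfolding sep_def models_holds by blast
  qed
qed

end

lemma ef_models:
  assumes "ef V m t (\<lambda>_. None) t' (\<lambda>_. None)" "rank \<phi> \<le> m" "bv \<phi> \<subseteq> V" "fv \<phi> = {}"
  shows "models t \<phi> \<longleftrightarrow> models t' \<phi>"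
  unfolding models_holds by (rule ef_holds[OF assms(1-3)]) (use assms(4) agree_none in auto)

definition VV :: "(nat \<times> 'a fo) set \<Rightarrow> nat set" where
  "VV F = insert 0 (\<Union>p\<in>F. bv (snd p))"

definition RR :: "(nat \<times> 'a fo) set \<Rightarrow> nat" where
  "RR F = Suc (\<Sum>p\<in>F. rank (snd p))"

definition DD :: "('c \<times> nat) set \<Rightarrow> (nat \<times> ('c \<times> nat) fo) set \<Rightarrow> (nat \<times> ('c \<times> nat) fo) set" where
  "DD Sig F = {p. p \<in> FO Sig \<and> rank (snd p) \<le> RR F \<and> bv (snd p) \<subseteq> VV F}"

lemma FO_iff: "(n, \<phi>) \<in> FO Sig \<longleftrightarrow> fv \<phi> = {} \<and> syms \<phi> \<subseteq> Sig \<and> (\<forall>i\<in>qvars \<phi>. i < n)"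
  unfolding FO_def by simp

context hint begin
lemma good_FO:
  assumes "good m {} \<chi>"
  shows "(n, \<chi>) \<in> FO Sig" "rank \<chi> \<le> m" "bv \<chi> \<subseteq> V"
  using assms unfolding good_def FO_iff by auto
end

lemma main_finite:
  assumes finS: "finite Sig" and finF: "finite F"
  shows "finite ((\<lambda>(m, \<phi>). mods lin Sig n \<phi>) ` {p \<in> DD Sig F. fst p = n})"
proof -
  let ?V = "VV F" and ?R = "RR F"
  have finV: "finite ?V" unfolding VV_def using finF finite_bv by auto
  interpret hint lin Sig n ?V by unfold_locales (use finS finV in \<open>auto simp: VV_def\<close>)
  obtain H where H: "finite H" "\<And>\<chi>. \<chi> \<in> H \<Longrightarrow> good ?R {} \<chi>"
    "\<And>t. wf_tree lin Sig n t \<Longrightarrow> \<exists>\<chi>\<in>H. models t \<chi>"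
    "\<And>\<chi> t t'. \<chi> \<in> H \<Longrightarrow> wf_tree lin Sig n t \<Longrightarrow> wf_tree lin Sig n t' \<Longrightarrow> models t \<chi> \<Longrightarrow> models t' \<chi> \<Longrightarrow>
        ef ?V ?R t (\<lambda>_. None) t' (\<lambda>_. None)"
    using hint_sent[of ?R] unfolding RR_def by blast
  have "(\<lambda>(m, \<phi>). mods lin Sig n \<phi>) ` {p \<in> DD Sig F. fst p = n} \<subseteq> (\<lambda>G. \<Union>(mods lin Sig n ` G)) ` Pow H"
  proof
    fix M assume "M \<in> (\<lambda>(m, \<phi>). mods lin Sig n \<phi>) ` {p \<in> DD Sig F. fst p = n}"
    then obtain \<phi> where \<phi>: "(n, \<phi>) \<in> DD Sig F" "M = mods lin Sig n \<phi>" by auto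
    have \<phi>1: "(n, \<phi>) \<in> FO Sig" "rank \<phi> \<le> ?R" "bv \<phi> \<subseteq> ?V" using \<phi>(1) unfolding DD_def by auto
    have \<phi>p: "fv \<phi> = {}" "rank \<phi> \<le> ?R" "bv \<phi> \<subseteq> ?V" using \<phi>1 unfolding FO_iff by auto
    define G where "G = {\<chi>\<in>H. \<exists>t\<in>mods lin Sig n \<chi>. models t \<phi>}"
    have "M = \<Union>(mods lin Sig n ` G)"
    proof
      show "M \<subseteq> \<Union>(mods lin Sig n ` G)"
      proof
        fix t assume "t \<in> M"
        then have t: "wf_tree lin Sig n t" "models t \<phi>" using \<phi>(2) unfolding mods_def by auto
        obtain \<chi> where "\<chi> \<in> H" "models t \<chi>" using H(3)[OF t(1)] by blast
        then have "\<chi> \<in> G" "t \<in> mods lin Sig n \<chi>" unfolding G_def mods_def using t by auto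
        then show "t \<in> \<Union>(mods lin Sig n ` G)" by blast
      qed
    next
      show "\<Union>(mods lin Sig n ` G) \<subseteq> M"
      proof
        fix t assume "t \<in> \<Union>(mods lin Sig n ` G)"
        then obtain \<chi> where \<chi>: "\<chi> \<in> H" "t \<in> mods lin Sig n \<chi>" "\<exists>t0\<in>mods lin Sig n \<chi>. models t0 \<phi>"
          unfolding G_def by auto
        obtain t0 where t0: "t0 \<in> mods lin Sig n \<chi>" "models t0 \<phi>" using \<chi>(3) by blast
        have "ef ?V ?R t0 (\<lambda>_. None) t (\<lambda>_. None)"
          using H(4)[OF \<chi>(1)] t0(1) \<chi>(2) unfolding mods_def by blast
        then have "models t \<phi>" using ef_models[OF _ \<phi>p(2,3,1)] t0(2) by blast
        then show "t \<in> M" using \<chi>(2) \<phi>(2) unfolding mods_def by auto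
      qed
    qed
    moreover have "G \<in> Pow H" unfolding G_def by auto
    ultimately show "M \<in> (\<lambda>G. \<Union>(mods lin Sig n ` G)) ` Pow H" by blast
  qed
  moreover have "finite ((\<lambda>G. \<Union>(mods lin Sig n ` G)) ` Pow H)" using H(1) by simp
  ultimately show ?thesis using finite_subset by blast
qed


lemma vertex_rel:
  assumes finS: "finite Sig" and finF: "finite F"
    and wfS: "wf_tree lin (trees_sorted lin Sig) n S" and wfT: "wf_tree lin (trees_sorted lin Sig) n T"
    and rel: "rel_option (rel_lab (cls_le (DD Sig F)))
               (map_option (map_lab (\<lambda>(s, k). (qcls lin Sig (DD Sig F) k s, k))) (S u))
               (map_option (map_lab (\<lambda>(s, k). (qcls lin Sig (DD Sig F) k s, k))) (T u))"
  shows "(issym S u \<longleftrightarrow> issym T u) \<and> ef (VV F) (RR F) (cmp S u) (\<lambda>_. None) (cmp T u) (\<lambda>_. None)"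
proof (cases "S u")
  case None
  then have "T u = None" using rel by (cases "T u") auto
  then show ?thesis using None by (simp add: issym_def cmp_None ef_refl)
next
  case (Some l)
  then obtain l' where Tu: "T u = Some l'" using rel by (cases "T u") auto
  have rl: "rel_lab (cls_le (DD Sig F)) (map_lab (\<lambda>(s, k). (qcls lin Sig (DD Sig F) k s, k)) l)
                (map_lab (\<lambda>(s, k). (qcls lin Sig (DD Sig F) k s, k)) l')"
    using rel Some Tu by simp
  show ?thesis
  proof (cases l)
    case (Var j)
    then have "l' = Var j" using rl by (cases l') auto
    then show ?thesis using Some Tu Var by (simp add: issym_def cmp_Var ef_refl)
  next
    case (Sym a)
    obtain s k where a: "a = (s, k)" by (cases a)
    obtain a' where l': "l' = Sym a'" using rl Sym by (cases l') auto
    obtain s' k' where a': "a' = (s', k')" by (cases a')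
    have cl: "cls_le (DD Sig F) (qcls lin Sig (DD Sig F) k s, k) (qcls lin Sig (DD Sig F) k' s', k')"
      using rl Sym a l' a' by simp
    then have kk: "k' = k" unfolding cls_le_def by simp
    obtain s0 t0 where st: "s0 \<in> qcls lin Sig (DD Sig F) k s" "t0 \<in> qcls lin Sig (DD Sig F) k s'"
      "sq (DD Sig F) k s0 t0"
      using cl kk unfolding cls_le_def by auto
    have Su: "S u = Some (Sym (s, k))" using Some Sym a by simp
    have Tu': "T u = Some (Sym (s', k))" using Tu l' a' kk by simp
    have ws: "wf_tree lin Sig k s"
    proof -
      have "(s, k) \<in> trees_sorted lin Sig" using wfS Su unfolding wf_tree_def by blast
      then show ?thesis unfolding trees_sorted_def by simp
    qed
    have ws': "wf_tree lin Sig k s'"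
    proof -
      have "(s', k) \<in> trees_sorted lin Sig" using wfT Tu' unfolding wf_tree_def by blast
      then show ?thesis unfolding trees_sorted_def by simp
    qed
    let ?V = "VV F" and ?R = "RR F"
    have finV: "finite ?V" unfolding VV_def using finF finite_bv by auto
    interpret hint lin Sig k ?V by unfold_locales (use finS finV in \<open>auto simp: VV_def\<close>)
    obtain H where H: "finite H" "\<And>\<chi>. \<chi> \<in> H \<Longrightarrow> good ?R {} \<chi>"
      "\<And>t. wf_tree lin Sig k t \<Longrightarrow> \<exists>\<chi>\<in>H. models t \<chi>"
      "\<And>\<chi> t t'. \<chi> \<in> H \<Longrightarrow> wf_tree lin Sig k t \<Longrightarrow> wf_tree lin Sig k t' \<Longrightarrow> models t \<chi> \<Longrightarrow> models t' \<chi> \<Longrightarrow>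
          ef ?V ?R t (\<lambda>_. None) t' (\<lambda>_. None)"
      using hint_sent[of ?R] unfolding RR_def by blast
    obtain \<chi> where \<chi>: "\<chi> \<in> H" "models s \<chi>" using H(3)[OF ws] by blast
    have inD: "(k, \<chi>) \<in> DD Sig F" using good_FO[OF H(2)[OF \<chi>(1)]] unfolding DD_def by auto
    have "models s0 \<chi>" using st(1) \<chi>(2) inD unfolding qcls_def sq_def by blast
    then have "models t0 \<chi>" using st(3) inD unfolding sq_def by blast
    then have "models s' \<chi>" using st(2) inD unfolding qcls_def sq_def by blast
    then have "ef ?V ?R s (\<lambda>_. None) s' (\<lambda>_. None)" using H(4)[OF \<chi>(1) ws ws' \<chi>(2)] by blast
    then show ?thesis using Su Tu' by (simp add: issym_def cmp_Sym)
  qed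
qed

lemma main_cong:
  assumes finS: "finite Sig" and finF: "finite F"
  shows "congruence_ordering lin Sig (DD Sig F)"
  unfolding congruence_ordering_def
proof (intro allI impI)
  fix n S T
  assume wfS: "wf_tree lin (trees_sorted lin Sig) n S" and wfT: "wf_tree lin (trees_sorted lin Sig) n T"
    and le: "tree_le (cls_le (DD Sig F)) (map_tree (\<lambda>(s, k). (qcls lin Sig (DD Sig F) k s, k)) S)
                                     (map_tree (\<lambda>(s, k). (qcls lin Sig (DD Sig F) k s, k)) T)"
  let ?V = "VV F" and ?R = "RR F"
  have vr: "\<And>u. (issym S u \<longleftrightarrow> issym T u) \<and> ef ?V ?R (cmp S u) (\<lambda>_. None) (cmp T u) (\<lambda>_. None)"
    using vertex_rel[OF finS finF wfS wfT] le unfolding tree_le_def map_tree_def by blast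
  have c2: "comp2 ?V ?R S T"
    by unfold_locales (use wf_goodS[OF wfS] wf_goodS[OF wfT] vr in auto)
  have E: "ef ?V ?R (flat S) (\<lambda>_. None) (flat T) (\<lambda>_. None)" using comp2_flat[OF c2] .
  show "sq (DD Sig F) n (flat S) (flat T)"
    unfolding sq_def
  proof (intro allI impI)
    fix \<phi> assume \<phi>: "(n, \<phi>) \<in> DD Sig F" and m: "models (flat S) \<phi>"
    have "(n, \<phi>) \<in> FO Sig" "rank \<phi> \<le> ?R" "bv \<phi> \<subseteq> ?V" using \<phi> unfolding DD_def by auto
    then have p: "fv \<phi> = {}" "rank \<phi> \<le> ?R" "bv \<phi> \<subseteq> ?V" unfolding FO_iff by auto
    show "models (flat T) \<phi>" using ef_models[OF E p(2,3,1)] m by blast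
  qed
qed

lemma Phi_sub_DD:
  assumes "finite F" "F \<subseteq> FO Sig"
  shows "F \<subseteq> DD Sig F"
proof
  fix p assume p: "p \<in> F"
  have "rank (snd p) \<le> (\<Sum>q\<in>F. rank (snd q))" by (rule member_le_sum) (use p assms(1) in auto)
  then have "rank (snd p) \<le> RR F" unfolding RR_def by simp
  moreover have "bv (snd p) \<subseteq> VV F" unfolding VV_def using p by auto
  ultimately show "p \<in> DD Sig F" unfolding DD_def using p assms(2) by auto
qed

lemma compositional_FO: "compositional lin (FO :: ('c \<times> nat) set \<Rightarrow> _)"
  unfolding compositional_def
proof (intro allI impI)
  fix \<Phi> :: "('c \<times> nat) set \<Rightarrow> (nat \<times> ('c \<times> nat) fo) set"
  assume h: "\<forall>Sig. finite Sig \<longrightarrow> finite (\<Phi> Sig) \<and> \<Phi> Sig \<subseteq> FO Sig"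
  show "\<exists>\<Delta>. \<forall>Sig. finite Sig \<longrightarrow> \<Phi> Sig \<subseteq> \<Delta> Sig \<and> \<Delta> Sig \<subseteq> FO Sig \<and>
      (\<forall>n. finite ((\<lambda>(m, \<phi>). mods lin Sig n \<phi>) ` {p \<in> \<Delta> Sig. fst p = n})) \<and> congruence_ordering lin Sig (\<Delta> Sig)"
  proof (intro exI[of _ "\<lambda>Sig. DD Sig (\<Phi> Sig)"] allI impI conjI)
    fix Sig :: "('c \<times> nat) set" assume fS: "finite Sig"
    have fF: "finite (\<Phi> Sig)" "\<Phi> Sig \<subseteq> FO Sig" using h fS by auto
    show "\<Phi> Sig \<subseteq> DD Sig (\<Phi> Sig)" using Phi_sub_DD[OF fF] .
    show "DD Sig (\<Phi> Sig) \<subseteq> FO Sig" unfolding DD_def by auto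
    show "\<And>n. finite ((\<lambda>(m, \<phi>). mods lin Sig n \<phi>) ` {p \<in> DD Sig (\<Phi> Sig). fst p = n})"
      using main_finite[OF fS fF(1)] .
    show "congruence_ordering lin Sig (DD Sig (\<Phi> Sig))" using main_cong[OF fS fF(1)] .
  qed
qed

theorem theorem10p5:
  shows "compositional False (FO :: ('c \<times> nat) set \<Rightarrow> _) \<and> compositional True (FO :: ('c \<times> nat) set \<Rightarrow> _)"
  using compositional_FO by blast


end
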